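(* Suppose the chain is recurrent and there exist a finite set $A\subset\mathbb X$ and a constant $C>0$ such that $\mathbb E_x\tau_A\le C$ for all $x\in\mathbb X$. Then the chain implodes towards every state $z\in\mathbb X$, i.e.\ for every $z\in\mathbb X$ there is $K_z<\infty$ with $\mathbb E_x\tau_{\{z\}}\le K_z$ for all $x\neq z$.
   Context: Let $\mathbb X$ be a countably infinite set and $\Gamma=(\Gamma_{xy})_{x,y\in\mathbb X}$ a matrix with $\Gamma_{xy}\ge0$ for $y\ne x$, $\gamma_x:=\sum_{y\ne x}\Gamma_{xy}$, $\Gamma_{xx}=-\gamma_x$, and $0<\gamma_x<\infty$ for all $x$. Let $P_{xy}=\Gamma_{xy}/\gamma_x$ for $y\neq x$ and $P_{xx}=0$; the discrete-time chain $(\tilde\xi_n)$ with transition matrix $P$ (embedded jump chain) is assumed irreducible. The continuous-time Markov chain $(\xi_t)_{t\ge0}$ with generator $\Gamma$: conditionally on $\tilde\xi$, holding times $\sigma_n$ ($n\ge1$) are independent exponential with parameter $\gamma_{\tilde\xi_{n-1}}$; $J_0=0$, $J_n=\sigma_1+\dots+\sigma_n$, $\zeta=\lim_nJ_n$; $\xi_t=\tilde\xi_n$ on $[J_n,J_{n+1})$, $\xi_t=\partial$ for $t\ge\zeta$. $\mathbb E_x$ refers to $\xi_0=x$; $\tau_A=\inf\{t\ge0:\xi_t\in A\}$. The chain implodes towards a proper subset $B$ if there is $K>0$ with $\mathbb E_x\tau_B\le K$ for all $x\in B^c$. *)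

theory Defs
  imports "HOL-Probability.Probability"
begin

definition rate :: "('a \<Rightarrow> 'a \<Rightarrow> real) \<Rightarrow> 'a \<Rightarrow> real" where
  "rate \<Gamma> x = - \<Gamma> x x"

definition jump_matrix :: "('a \<Rightarrow> 'a \<Rightarrow> real) \<Rightarrow> 'a \<Rightarrow> 'a \<Rightarrow> real" where
  "jump_matrix \<Gamma> x y = (if y = x then 0 else \<Gamma> x y / rate \<Gamma> x)"

definition generator :: "('a \<Rightarrow> 'a \<Rightarrow> real) \<Rightarrow> bool" where
  "generator \<Gamma> \<longleftrightarrow>
     (\<forall>x y. y \<noteq> x \<longrightarrow> \<Gamma> x y \<ge> 0) \<and>
     (\<forall>x. ((\<lambda>y. \<Gamma> x y) has_sum rate \<Gamma> x) (UNIV - {x})) \<and>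
     (\<forall>x. rate \<Gamma> x > 0)"

definition jump_irreducible :: "('a \<Rightarrow> 'a \<Rightarrow> real) \<Rightarrow> bool" where
  "jump_irreducible \<Gamma> \<longleftrightarrow>
     (\<forall>x y. (x, y) \<in> {(u, v). jump_matrix \<Gamma> u v > 0}\<^sup>*)"

text \<open>A realization of the chain: for every initial state x a probability space M x
  carrying the jump chain xi~_n (n \<ge> 0) and holding times sigma_n (n \<ge> 1) with the
  prescribed joint law: xi~ is a Markov chain with transition matrix P started at x and,
  conditionally on xi~, the sigma_n are independent Exp(gamma_{xi~_{n-1}}).
  The finite-dimensional distributions below determine this joint law.\<close>
definition ctmc_realization ::
  "('a \<Rightarrow> 'a \<Rightarrow> real) \<Rightarrow> ('a \<Rightarrow> 'w measure) \<Rightarrow> (nat \<Rightarrow> 'w \<Rightarrow> 'a) \<Rightarrow> (nat \<Rightarrow> 'w \<Rightarrow> real) \<Rightarrow> bool"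
where
  "ctmc_realization \<Gamma> M jc \<sigma> \<longleftrightarrow>
     (\<forall>x. prob_space (M x) \<and>
        (\<forall>n. jc n \<in> measurable (M x) (count_space UNIV)) \<and>
        (\<forall>n. \<sigma> n \<in> borel_measurable (M x)) \<and>
        (\<forall>n (ys :: nat \<Rightarrow> 'a) (ts :: nat \<Rightarrow> real). (\<forall>k\<in>{1..n}. ts k \<ge> 0) \<longrightarrow>
           measure (M x) {\<omega> \<in> space (M x). (\<forall>k\<le>n. jc k \<omega> = ys k) \<and> (\<forall>k\<in>{1..n}. \<sigma> k \<omega> > ts k)}
           = (if ys 0 = x then 1 else 0) *
             (\<Prod>k<n. jump_matrix \<Gamma> (ys k) (ys (Suc k)) * exp (- rate \<Gamma> (ys k) * ts (Suc k)))))"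

definition jump_time :: "(nat \<Rightarrow> 'w \<Rightarrow> real) \<Rightarrow> nat \<Rightarrow> 'w \<Rightarrow> real" where
  "jump_time \<sigma> n \<omega> = (\<Sum>k\<in>{1..n}. \<sigma> k \<omega>)"

text \<open>The continuous-time process: xi_t = xi~_n on [J_n, J_{n+1}), and the cemetery
  state (None) for t \<ge> zeta = lim J_n.\<close>
definition ctmc_state :: "(nat \<Rightarrow> 'w \<Rightarrow> 'a) \<Rightarrow> (nat \<Rightarrow> 'w \<Rightarrow> real) \<Rightarrow> real \<Rightarrow> 'w \<Rightarrow> 'a option" where
  "ctmc_state jc \<sigma> t \<omega> =
     (if \<exists>n. jump_time \<sigma> n \<omega> \<le> t \<and> t < jump_time \<sigma> (Suc n) \<omega>
      then Some (jc (LEAST n. jump_time \<sigma> n \<omega> \<le> t \<and> t < jump_time \<sigma> (Suc n) \<omega>) \<omega>)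
      else None)"

definition hitting_time :: "(nat \<Rightarrow> 'w \<Rightarrow> 'a) \<Rightarrow> (nat \<Rightarrow> 'w \<Rightarrow> real) \<Rightarrow> 'a set \<Rightarrow> 'w \<Rightarrow> ennreal" where
  "hitting_time jc \<sigma> B \<omega> = Inf {ennreal t | t. t \<ge> 0 \<and> ctmc_state jc \<sigma> t \<omega> \<in> Some ` B}"

definition expected_hitting_time ::
  "('a \<Rightarrow> 'w measure) \<Rightarrow> (nat \<Rightarrow> 'w \<Rightarrow> 'a) \<Rightarrow> (nat \<Rightarrow> 'w \<Rightarrow> real) \<Rightarrow> 'a \<Rightarrow> 'a set \<Rightarrow> ennreal" where
  "expected_hitting_time M jc \<sigma> x B = (\<integral>\<^sup>+ \<omega>. hitting_time jc \<sigma> B \<omega> \<partial>M x)"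

definition recurrent_chain ::
  "('a \<Rightarrow> 'w measure) \<Rightarrow> (nat \<Rightarrow> 'w \<Rightarrow> 'a) \<Rightarrow> bool" where
  "recurrent_chain M jc \<longleftrightarrow>
     (\<forall>x. measure (M x) {\<omega> \<in> space (M x). \<exists>n\<ge>1. jc n \<omega> = x} = 1)"

definition implodes_towards ::
  "('a \<Rightarrow> 'w measure) \<Rightarrow> (nat \<Rightarrow> 'w \<Rightarrow> 'a) \<Rightarrow> (nat \<Rightarrow> 'w \<Rightarrow> real) \<Rightarrow> 'a set \<Rightarrow> bool" where
  "implodes_towards M jc \<sigma> B \<longleftrightarrow>
     (\<exists>K::real. K > 0 \<and> (\<forall>x. x \<notin> B \<longrightarrow> expected_hitting_time M jc \<sigma> x B \<le> ennreal K))"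

end

theory Submission
  imports Defs
begin


abbreviation CS :: "'a measure" where "CS \<equiv> count_space UNIV"

lemma nn_swap:
  fixes f :: "'a::countable \<Rightarrow> 'b::countable \<Rightarrow> ennreal"
  shows "(\<integral>\<^sup>+x. \<integral>\<^sup>+y. f x y \<partial>CS \<partial>CS) = (\<integral>\<^sup>+y. \<integral>\<^sup>+x. f x y \<partial>CS \<partial>CS)"
proof -
  interpret pair_sigma_finite "count_space (UNIV::'a set)" "count_space (UNIV::'b set)"
    by (intro pair_sigma_finite.intro sigma_finite_measure_count_space_countable) auto
  show ?thesis
    by (rule Fubini'[symmetric]) (simp add: pair_measure_countable)
qed

lemma int_single:
  "(\<integral>\<^sup>+z. (if z = a then f z else 0) \<partial>CS) = (f a :: ennreal)"
proof -
  have "(\<integral>\<^sup>+z. (if z = a then f z else 0) \<partial>CS) = (\<integral>\<^sup>+z. f a * indicator {a} z \<partial>CS)"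
    by (intro nn_integral_cong) (auto split: split_indicator)
  also have "\<dots> = f a" by (simp add: nn_integral_cmult_indicator)
  finally show ?thesis .
qed

lemma int_single':
  "(\<integral>\<^sup>+z. (if a = z then f z else 0) \<partial>CS) = (f a :: ennreal)"
proof -
  have "(\<lambda>z. if a = z then f z else 0) = (\<lambda>z. if z = a then f z else 0)" by auto
  then show ?thesis using int_single[of a f] by simp
qed

fun mu :: "('a \<Rightarrow> 'a \<Rightarrow> real) \<Rightarrow> 'a set \<Rightarrow> nat \<Rightarrow> 'a \<Rightarrow> 'a \<Rightarrow> ennreal" where
  "mu P B 0 x y = (if x = y then 1 else 0)"
| "mu P B (Suc n) x y = (if x \<in> B then 0 else \<integral>\<^sup>+z. ennreal (P x z) * mu P B n z y \<partial>CS)"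

fun QQ :: "('a \<Rightarrow> 'a \<Rightarrow> real) \<Rightarrow> 'a set \<Rightarrow> nat \<Rightarrow> 'a \<Rightarrow> ennreal" where
  "QQ P B 0 x = 1"
| "QQ P B (Suc n) x = (if x \<in> B then 0 else \<integral>\<^sup>+z. ennreal (P x z) * QQ P B n z \<partial>CS)"

fun HH :: "('a \<Rightarrow> 'a \<Rightarrow> real) \<Rightarrow> ('a \<Rightarrow> real) \<Rightarrow> 'a set \<Rightarrow> nat \<Rightarrow> 'a \<Rightarrow> ennreal" where
  "HH P g B 0 x = 0"
| "HH P g B (Suc n) x = (if x \<in> B then 0 else ennreal (g x) + (\<integral>\<^sup>+z. ennreal (P x z) * HH P g B n z \<partial>CS))"

lemma mu_fwd:
  fixes P :: "'a::countable \<Rightarrow> 'a \<Rightarrow> real"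
  shows "mu P B (Suc n) x y' = (\<integral>\<^sup>+y. (if y \<in> B then 0 else mu P B n x y * ennreal (P y y')) \<partial>CS)"
proof (induction n arbitrary: x)
  case 0
  have "(\<integral>\<^sup>+z. ennreal (P x z) * mu P B 0 z y' \<partial>CS) = (\<integral>\<^sup>+z. (if z = y' then ennreal (P x z) else 0) \<partial>CS)"
    by (intro nn_integral_cong) auto
  also have "\<dots> = ennreal (P x y')" by (rule int_single)
  finally have 1: "(\<integral>\<^sup>+z. ennreal (P x z) * mu P B 0 z y' \<partial>CS) = ennreal (P x y')" .
  have "(\<integral>\<^sup>+y. (if y \<in> B then 0 else mu P B 0 x y * ennreal (P y y')) \<partial>CS)
      = (\<integral>\<^sup>+y. (if x = y then (if y \<in> B then 0 else ennreal (P y y')) else 0) \<partial>CS)"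
    by (intro nn_integral_cong) auto
  also have "\<dots> = (if x \<in> B then 0 else ennreal (P x y'))" by (subst int_single') simp
  finally show ?case using 1 by simp
next
  case (Suc n)
  show ?case
  proof (cases "x \<in> B")
    case True
    have "(\<integral>\<^sup>+y. (if y \<in> B then 0 else mu P B (Suc n) x y * ennreal (P y y')) \<partial>CS) = (\<integral>\<^sup>+(y::'a). 0 \<partial>CS)"
      apply (rule nn_integral_cong)
      using True apply simp
      done
    then show ?thesis using True by simp
  next
    case False
    have "mu P B (Suc (Suc n)) x y' = (\<integral>\<^sup>+z. ennreal (P x z) * mu P B (Suc n) z y' \<partial>CS)"
      using False by simp
    also have "\<dots> = (\<integral>\<^sup>+z. \<integral>\<^sup>+y. ennreal (P x z) * (if y \<in> B then 0 else mu P B n z y * ennreal (P y y')) \<partial>CS \<partial>CS)"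
      by (subst Suc.IH) (simp add: nn_integral_cmult)
    also have "\<dots> = (\<integral>\<^sup>+y. \<integral>\<^sup>+z. ennreal (P x z) * (if y \<in> B then 0 else mu P B n z y * ennreal (P y y')) \<partial>CS \<partial>CS)"
      by (rule nn_swap)
    also have "\<dots> = (\<integral>\<^sup>+y. (if y \<in> B then 0 else mu P B (Suc n) x y * ennreal (P y y')) \<partial>CS)"
    proof (intro nn_integral_cong)
      fix y
      show "(\<integral>\<^sup>+z. ennreal (P x z) * (if y \<in> B then 0 else mu P B n z y * ennreal (P y y')) \<partial>CS)
          = (if y \<in> B then 0 else mu P B (Suc n) x y * ennreal (P y y'))"
      proof (cases "y \<in> B")
        case True then show ?thesis by simp
      next
        case yB: False
        have "(\<integral>\<^sup>+z. ennreal (P x z) * (mu P B n z y * ennreal (P y y')) \<partial>CS)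
            = (\<integral>\<^sup>+z. (ennreal (P x z) * mu P B n z y) * ennreal (P y y') \<partial>CS)"
          by (simp add: mult.assoc)
        also have "\<dots> = (\<integral>\<^sup>+z. ennreal (P x z) * mu P B n z y \<partial>CS) * ennreal (P y y')"
          by (rule nn_integral_multc) simp
        finally show ?thesis using yB False by simp
      qed
    qed
    finally show ?thesis .
  qed
qed


lemma mu_inB: "x \<in> B \<Longrightarrow> y \<notin> B \<Longrightarrow> mu P B k x y = 0"
  by (cases k) auto

lemma QQ_mu:
  fixes P :: "'a::countable \<Rightarrow> 'a \<Rightarrow> real"
  shows "QQ P B n x = (\<integral>\<^sup>+y. mu P B n x y \<partial>CS)"
proof (induction n arbitrary: x)
  case 0
  have "(\<integral>\<^sup>+y. mu P B 0 x y \<partial>CS) = (\<integral>\<^sup>+y. (if x = y then 1 else 0) \<partial>CS)" by simp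
  also have "\<dots> = 1" by (subst int_single') simp
  finally show ?case by simp
next
  case (Suc n)
  show ?case
  proof (cases "x \<in> B")
    case True
    then show ?thesis by simp
  next
    case False
    have "(\<integral>\<^sup>+y. mu P B (Suc n) x y \<partial>CS) = (\<integral>\<^sup>+y. \<integral>\<^sup>+z. ennreal (P x z) * mu P B n z y \<partial>CS \<partial>CS)"
      using False by simp
    also have "\<dots> = (\<integral>\<^sup>+z. \<integral>\<^sup>+y. ennreal (P x z) * mu P B n z y \<partial>CS \<partial>CS)"
      by (rule nn_swap)
    also have "\<dots> = (\<integral>\<^sup>+z. ennreal (P x z) * QQ P B n z \<partial>CS)"
      by (simp add: nn_integral_cmult Suc.IH)
    finally show ?thesis using False by simp
  qed
qed

lemma HH_mu:
  fixes P :: "'a::countable \<Rightarrow> 'a \<Rightarrow> real"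
  shows "HH P g B n x = (\<Sum>k<n. \<integral>\<^sup>+y. (if y \<in> B then 0 else ennreal (g y) * mu P B k x y) \<partial>CS)"
proof (induction n arbitrary: x)
  case 0
  then show ?case by simp
next
  case (Suc n)
  show ?case
  proof (cases "x \<in> B")
    case True
    have "(\<integral>\<^sup>+y. (if y \<in> B then 0 else ennreal (g y) * mu P B k x y) \<partial>CS) = 0" for k
    proof -
      have "(\<integral>\<^sup>+y. (if y \<in> B then 0 else ennreal (g y) * mu P B k x y) \<partial>CS) = (\<integral>\<^sup>+(y::'a). 0 \<partial>CS)"
        by (rule nn_integral_cong) (simp add: mu_inB[OF True])
      then show ?thesis by simp
    qed
    then show ?thesis using True by simp
  next
    case False
    let ?F = "\<lambda>k y. (if y \<in> B then 0 else ennreal (g y) * mu P B k x y)"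
    have t0: "(\<integral>\<^sup>+y. ?F 0 y \<partial>CS) = ennreal (g x)"
    proof -
      have "(\<integral>\<^sup>+y. ?F 0 y \<partial>CS) = (\<integral>\<^sup>+y. (if x = y then (if y \<in> B then 0 else ennreal (g y)) else 0) \<partial>CS)"
        by (rule nn_integral_cong) auto
      also have "\<dots> = ennreal (g x)" using False by (subst int_single') simp
      finally show ?thesis .
    qed
    have tS: "(\<integral>\<^sup>+z. ennreal (P x z) * (\<integral>\<^sup>+y. (if y \<in> B then 0 else ennreal (g y) * mu P B k z y) \<partial>CS) \<partial>CS)
        = (\<integral>\<^sup>+y. ?F (Suc k) y \<partial>CS)" for k
    proof -
      have "(\<integral>\<^sup>+z. ennreal (P x z) * (\<integral>\<^sup>+y. (if y \<in> B then 0 else ennreal (g y) * mu P B k z y) \<partial>CS) \<partial>CS)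
          = (\<integral>\<^sup>+z. \<integral>\<^sup>+y. ennreal (P x z) * (if y \<in> B then 0 else ennreal (g y) * mu P B k z y) \<partial>CS \<partial>CS)"
        by (simp add: nn_integral_cmult)
      also have "\<dots> = (\<integral>\<^sup>+y. \<integral>\<^sup>+z. ennreal (P x z) * (if y \<in> B then 0 else ennreal (g y) * mu P B k z y) \<partial>CS \<partial>CS)"
        by (rule nn_swap)
      also have "\<dots> = (\<integral>\<^sup>+y. ?F (Suc k) y \<partial>CS)"
      proof (rule nn_integral_cong)
        fix y
        show "(\<integral>\<^sup>+z. ennreal (P x z) * (if y \<in> B then 0 else ennreal (g y) * mu P B k z y) \<partial>CS) = ?F (Suc k) y"
        proof (cases "y \<in> B")
          case True then show ?thesis by simp
        next
          case yB: False
          have "(\<integral>\<^sup>+z. ennreal (P x z) * (ennreal (g y) * mu P B k z y) \<partial>CS)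
              = (\<integral>\<^sup>+z. ennreal (g y) * (ennreal (P x z) * mu P B k z y) \<partial>CS)"
            by (simp add: mult.left_commute)
          also have "\<dots> = ennreal (g y) * (\<integral>\<^sup>+z. ennreal (P x z) * mu P B k z y \<partial>CS)"
            by (rule nn_integral_cmult) simp
          finally show ?thesis using yB False by simp
        qed
      qed
      finally show ?thesis .
    qed
    have "HH P g B (Suc n) x = ennreal (g x) + (\<integral>\<^sup>+z. (\<Sum>k<n. ennreal (P x z) * (\<integral>\<^sup>+y. (if y \<in> B then 0 else ennreal (g y) * mu P B k z y) \<partial>CS)) \<partial>CS)"
      using False by (simp add: Suc.IH sum_distrib_left)
    also have "\<dots> = ennreal (g x) + (\<Sum>k<n. \<integral>\<^sup>+z. ennreal (P x z) * (\<integral>\<^sup>+y. (if y \<in> B then 0 else ennreal (g y) * mu P B k z y) \<partial>CS) \<partial>CS)"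
      by (subst nn_integral_sum) auto
    also have "\<dots> = ennreal (g x) + (\<Sum>k<n. \<integral>\<^sup>+y. ?F (Suc k) y \<partial>CS)"
      by (simp only: tS)
    also have "\<dots> = (\<Sum>k<Suc n. \<integral>\<^sup>+y. ?F k y \<partial>CS)"
      by (subst sum.lessThan_Suc_shift) (simp add: t0)
    finally show ?thesis .
  qed
qed


lemma INF_mult_le:
  fixes c :: ennreal and f :: "nat \<Rightarrow> ennreal"
  assumes "c < top"
  shows "(INF i. c * f i) \<le> c * (INF i. f i)"
proof (cases "c = 0")
  case True then show ?thesis by simp
next
  case False
  let ?I = "INF i. c * f i"
  have "?I / c \<le> f i" for i
  proof -
    have "?I \<le> c * f i" by (rule INF_lower) simp
    then have "?I / c \<le> (f i * c) / c" by (simp add: divide_right_mono_ennreal mult.commute)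
    also have "\<dots> = f i" using False assms by (simp add: mult_divide_eq_ennreal)
    finally show ?thesis .
  qed
  then have "?I / c \<le> (INF i. f i)" by (rule INF_greatest)
  then have "(?I / c) * c \<le> (INF i. f i) * c" by (rule mult_right_mono) simp
  moreover have "(?I / c) * c = ?I" using False assms by (simp add: ennreal_divide_times)
  ultimately show ?thesis by (simp add: mult.commute)
qed

lemma split_int:
  fixes f :: "'a \<Rightarrow> ennreal"
  shows "(\<integral>\<^sup>+y. f y \<partial>CS) = f b + (\<integral>\<^sup>+y. (if y = b then 0 else f y) \<partial>CS)"
proof -
  have "(\<integral>\<^sup>+y. f y \<partial>CS) = (\<integral>\<^sup>+y. (if y = b then f y else 0) + (if y = b then 0 else f y) \<partial>CS)"
    by (rule nn_integral_cong) simp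
  also have "\<dots> = (\<integral>\<^sup>+y. (if y = b then f y else 0) \<partial>CS) + (\<integral>\<^sup>+y. (if y = b then 0 else f y) \<partial>CS)"
    by (rule nn_integral_add) auto
  also have "\<dots> = f b + (\<integral>\<^sup>+y. (if y = b then 0 else f y) \<partial>CS)"
    by (simp only: int_single)
  finally show ?thesis .
qed

context
  fixes P :: "'a::countable \<Rightarrow> 'a \<Rightarrow> real"
  assumes Pnn: "\<And>x y. 0 \<le> P x y"
    and Prow: "\<And>x. (\<integral>\<^sup>+y. ennreal (P x y) \<partial>CS) = 1"
begin

lemma QQ_le1: "QQ P B n x \<le> 1"
proof (induction n arbitrary: x)
  case 0 then show ?case by simp
next
  case (Suc n)
  have "(\<integral>\<^sup>+z. ennreal (P x z) * QQ P B n z \<partial>CS) \<le> (\<integral>\<^sup>+z. ennreal (P x z) * 1 \<partial>CS)"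
    by (intro nn_integral_mono mult_left_mono Suc.IH) simp
  then show ?case using Prow[of x] by simp
qed

lemma QQ_dec: "QQ P B (Suc n) x \<le> QQ P B n x"
proof (induction n arbitrary: x)
  case 0 then show ?case using QQ_le1[of B "Suc 0" x] by simp
next
  case (Suc n)
  have "(\<integral>\<^sup>+z. ennreal (P x z) * QQ P B (Suc n) z \<partial>CS) \<le> (\<integral>\<^sup>+z. ennreal (P x z) * QQ P B n z \<partial>CS)"
    by (intro nn_integral_mono mult_left_mono Suc.IH) simp
  then show ?case by simp
qed

lemma QQ_decseq: "decseq (\<lambda>n. QQ P B n x)"
  by (rule decseq_SucI) (rule QQ_dec)

lemma QQ_mono_B: "B \<subseteq> B' \<Longrightarrow> QQ P B' n x \<le> QQ P B n x"
proof (induction n arbitrary: x)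
  case 0 then show ?case by simp
next
  case (Suc n)
  have "(\<integral>\<^sup>+z. ennreal (P x z) * QQ P B' n z \<partial>CS) \<le> (\<integral>\<^sup>+z. ennreal (P x z) * QQ P B n z \<partial>CS)"
    by (intro nn_integral_mono mult_left_mono Suc.IH Suc.prems) simp
  then show ?case using Suc.prems by auto
qed

lemma HH_inc: "HH P g B n x \<le> HH P g B (Suc n) x"
proof (induction n arbitrary: x)
  case 0 then show ?case by simp
next
  case (Suc n)
  have "(\<integral>\<^sup>+z. ennreal (P x z) * HH P g B n z \<partial>CS) \<le> (\<integral>\<^sup>+z. ennreal (P x z) * HH P g B (Suc n) z \<partial>CS)"
    by (intro nn_integral_mono mult_left_mono Suc.IH) simp
  then show ?case by (simp add: add_left_mono)
qed

lemma HH_incseq: "incseq (\<lambda>n. HH P g B n x)"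
  by (rule incseq_SucI) (rule HH_inc)

lemma HH_mono_B: "B \<subseteq> B' \<Longrightarrow> HH P g B' n x \<le> HH P g B n x"
proof (induction n arbitrary: x)
  case 0 then show ?case by simp
next
  case (Suc n)
  have "(\<integral>\<^sup>+z. ennreal (P x z) * HH P g B' n z \<partial>CS) \<le> (\<integral>\<^sup>+z. ennreal (P x z) * HH P g B n z \<partial>CS)"
    by (intro nn_integral_mono mult_left_mono Suc.IH Suc.prems) simp
  then show ?case using Suc.prems by (auto simp: add_left_mono)
qed

lemma HH_in: "x \<in> B \<Longrightarrow> HH P g B n x = 0"
  by (cases n) auto

lemma Pab_le1: "P a b \<le> 1"
proof -
  have "ennreal (P a b) \<le> (\<integral>\<^sup>+y. ennreal (P a y) \<partial>CS)"
    using split_int[of "\<lambda>y. ennreal (P a y)" b] by simp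
  then show ?thesis using Prow[of a] by (simp add: ennreal_le_1)
qed


lemma hit_core:
  fixes z :: 'a and A :: "'a set"
  defines "RA \<equiv> {(u,v). u \<in> A \<and> v \<in> A \<and> P u v > 0}"
  assumes finA: "finite A" and zA: "z \<in> A"
    and conn: "\<And>a. a \<in> A \<Longrightarrow> (a,z) \<in> RA\<^sup>*"
    and Q0: "\<And>x. (INF n. QQ P A n x) = 0"
  shows "(INF n. QQ P {z} n x) = 0"
proof -
  define e where "e x = (INF n. QQ P {z} n x)" for x
  have e_le_Q: "e x \<le> QQ P {z} n x" for x n unfolding e_def by (rule INF_lower) simp
  have e_le1: "e x \<le> 1" for x using e_le_Q[of x 0] by simp
  have ez: "e z = 0" using e_le_Q[of z 1] by simp
  have e_harm: "e x \<le> (\<integral>\<^sup>+y. ennreal (P x y) * e y \<partial>CS)" if "x \<noteq> z" for x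
  proof -
    have "e x \<le> (INF n. QQ P {z} (Suc n) x)" by (intro INF_greatest e_le_Q)
    also have "\<dots> = (INF n. \<integral>\<^sup>+y. ennreal (P x y) * QQ P {z} n y \<partial>CS)" using that by simp
    also have "\<dots> = (\<integral>\<^sup>+y. (INF n. ennreal (P x y) * QQ P {z} n y) \<partial>CS)"
    proof (rule nn_integral_monotone_convergence_INF_decseq[symmetric])
      show "decseq (\<lambda>n y. ennreal (P x y) * QQ P {z} n y)"
        by (intro decseq_SucI le_funI mult_left_mono QQ_dec) simp
      show "(\<lambda>y. ennreal (P x y) * QQ P {z} i y) \<in> borel_measurable CS" for i by simp
      show "(\<integral>\<^sup>+y. ennreal (P x y) * QQ P {z} i y \<partial>CS) < \<infinity>" for i
      proof -
        have "(\<integral>\<^sup>+y. ennreal (P x y) * QQ P {z} i y \<partial>CS) \<le> (\<integral>\<^sup>+y. ennreal (P x y) * 1 \<partial>CS)"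
          by (intro nn_integral_mono mult_left_mono QQ_le1) simp
        then show ?thesis using Prow[of x] by (simp add: le_less_trans)
      qed
    qed
    also have "\<dots> \<le> (\<integral>\<^sup>+y. ennreal (P x y) * e y \<partial>CS)"
      unfolding e_def by (intro nn_integral_mono INF_mult_le) simp
    finally show ?thesis .
  qed
  define s where "s = Max (e ` A)"
  have e_le_s_A: "a \<in> A \<Longrightarrow> e a \<le> s" for a using finA by (simp add: s_def)
  have s_in: "s \<in> e ` A" unfolding s_def using finA zA by (intro Max_in) auto
  have s_le1: "s \<le> 1" using s_in e_le1 by auto
  have key: "e x \<le> s + QQ P A n x" for n x
  proof (induction n arbitrary: x)
    case 0
    have "1 \<le> s + 1" by (rule add_increasing) auto
    then show ?case using e_le1[of x] by (simp add: order_trans)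
  next
    case (Suc n)
    show ?case
    proof (cases "x \<in> A")
      case True
      then show ?thesis using e_le_s_A[of x] by (simp add: add_increasing2)
    next
      case False
      then have xz: "x \<noteq> z" using zA by auto
      have "e x \<le> (\<integral>\<^sup>+y. ennreal (P x y) * e y \<partial>CS)" by (rule e_harm[OF xz])
      also have "\<dots> \<le> (\<integral>\<^sup>+y. ennreal (P x y) * s + ennreal (P x y) * QQ P A n y \<partial>CS)"
        by (intro nn_integral_mono) (simp add: distrib_left[symmetric] mult_left_mono Suc.IH)
      also have "\<dots> = (\<integral>\<^sup>+y. ennreal (P x y) * s \<partial>CS) + (\<integral>\<^sup>+y. ennreal (P x y) * QQ P A n y \<partial>CS)"
        by (rule nn_integral_add) auto
      also have "\<dots> = s + QQ P A (Suc n) x"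
        using False Prow[of x] by (simp add: nn_integral_multc)
      finally show ?thesis .
    qed
  qed
  have e_le_s: "e x \<le> s" for x
  proof -
    have "e x \<le> (INF n. s + QQ P A n x)" by (intro INF_greatest key)
    also have "\<dots> = s" by (simp add: INF_ennreal_const_add Q0)
    finally show ?thesis .
  qed
  obtain sr where sr: "s = ennreal sr" "0 \<le> sr"
    using s_le1 by (metis ennreal_cases ennreal_le_1 ennreal_one_neq_top neq_top_trans top.extremum_uniqueI)
  define er where "er x = enn2real (e x)" for x
  have er: "e x = ennreal (er x)" "0 \<le> er x" "er x \<le> sr" for x
  proof -
    have "e x \<le> ennreal sr" using e_le_s[of x] sr by simp
    then obtain q where "q \<ge> 0" "e x = ennreal q" "q \<le> sr" using le_ennreal_iff sr(2) by blast
    then show "e x = ennreal (er x)" "0 \<le> er x" "er x \<le> sr" by (auto simp: er_def)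
  qed
  have finRA: "finite RA"
  proof -
    have "RA \<subseteq> A \<times> A" by (auto simp: RA_def)
    then show ?thesis using finA finite_subset by blast
  qed
  define p where "p = Min (insert 1 ((\<lambda>(u,v). P u v) ` RA))"
  have p_pos: "0 < p" unfolding p_def using finRA by (subst Min_gr_iff) (auto simp: RA_def)
  have p_le1: "p \<le> 1" unfolding p_def using finRA by auto
  have p_le: "(u,v) \<in> RA \<Longrightarrow> p \<le> P u v" for u v unfolding p_def using finRA by (intro Min_le) auto
  have lev: "er a + p ^ k * sr \<le> sr" if "(a,z) \<in> RA ^^ k" for k a
    using that
  proof (induction k arbitrary: a)
    case 0
    then have "a = z" by simp
    then show ?case using ez er[of z] by simp
  next
    case (Suc k)
    obtain b where ab: "(a,b) \<in> RA" and bz: "(b,z) \<in> RA ^^ k" using relpow_Suc_D2[OF Suc.prems] by blast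
    have IH: "er b + p ^ k * sr \<le> sr" by (rule Suc.IH[OF bz])
    show ?case
    proof (cases "a = z")
      case True
      have "p ^ Suc k \<le> 1" using p_pos p_le1 by (intro power_le_one) auto
      then have "p ^ Suc k * sr \<le> sr" using sr(2) p_pos by (intro mult_left_le_one_le) auto
      then show ?thesis using True ez er[of z] by simp
    next
      case False
      have split1: "(\<integral>\<^sup>+y. (if y = b then 0 else ennreal (P a y)) \<partial>CS) = ennreal (1 - P a b)"
      proof -
        have "ennreal (P a b) + (\<integral>\<^sup>+y. (if y = b then 0 else ennreal (P a y)) \<partial>CS) = 1"
          using split_int[of "\<lambda>y. ennreal (P a y)" b] Prow[of a] by simp
        then have "(\<integral>\<^sup>+y. (if y = b then 0 else ennreal (P a y)) \<partial>CS) = 1 - ennreal (P a b)"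
          by (metis ennreal_add_diff_cancel_left ennreal_neq_top)
        also have "\<dots> = ennreal (1 - P a b)" using Pnn[of a b] by (simp add: ennreal_minus[symmetric])
        finally show ?thesis .
      qed
      have "e a \<le> (\<integral>\<^sup>+y. ennreal (P a y) * e y \<partial>CS)" by (rule e_harm[OF False])
      also have "\<dots> = ennreal (P a b) * e b + (\<integral>\<^sup>+y. (if y = b then 0 else ennreal (P a y) * e y) \<partial>CS)"
        by (rule split_int)
      also have "(\<integral>\<^sup>+y. (if y = b then 0 else ennreal (P a y) * e y) \<partial>CS) \<le> (\<integral>\<^sup>+y. (if y = b then 0 else ennreal (P a y)) * s \<partial>CS)"
        by (intro nn_integral_mono) (auto intro: mult_left_mono e_le_s)
      also have "\<dots> = ennreal (1 - P a b) * s" by (simp add: nn_integral_multc split1)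
      finally have 0: "e a \<le> ennreal (P a b) * e b + ennreal (1 - P a b) * s" by simp
      have eq: "ennreal (P a b) * ennreal (er b) + ennreal (1 - P a b) * ennreal sr = ennreal (P a b * er b + (1 - P a b) * sr)"
        using er(2)[of b] sr(2) Pnn[of a b] Pab_le1[of a b] by (simp add: ennreal_mult ennreal_plus)
      have "ennreal (er a) \<le> ennreal (P a b * er b + (1 - P a b) * sr)"
        using 0 eq er(1)[of a] er(1)[of b] sr(1) by simp
      then have 1: "er a \<le> P a b * er b + (1 - P a b) * sr"
        using er(2)[of b] sr(2) Pnn[of a b] Pab_le1[of a b] by (subst (asm) ennreal_le_iff) auto
      have "p * (p ^ k * sr) \<le> P a b * (sr - er b)"
        using IH p_le[OF ab] p_pos sr(2) by (intro mult_mono) auto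
      then show ?thesis using 1 by (simp add: algebra_simps)
    qed
  qed
  obtain a where aA: "a \<in> A" and ea: "e a = s" using s_in by blast
  obtain k where "(a,z) \<in> RA ^^ k" using conn[OF aA] rtrancl_power by blast
  from lev[OF this] have "p ^ k * sr \<le> 0" using ea er[of a] sr by simp
  then have "sr = 0" using p_pos sr(2) by (metis mult_le_0_iff order_antisym_conv zero_less_power linorder_not_le)
  then have "e x \<le> 0" using e_le_s[of x] sr by simp
  then show ?thesis by (simp add: e_def)
qed


lemma time_core:
  fixes z :: 'a and A :: "'a set" and g :: "'a \<Rightarrow> real" and C :: real
  defines "RA \<equiv> {(u,v). u \<in> A \<and> v \<in> A \<and> P u v > 0}"
  assumes finA: "finite A" and zA: "z \<in> A"
    and conn: "\<And>a. a \<in> A \<Longrightarrow> (a,z) \<in> RA\<^sup>*"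
    and gpos: "\<And>x. 0 < g x" and Cnn: "0 \<le> C"
    and Hb: "\<And>n x. HH P g A n x \<le> ennreal C"
  shows "\<exists>K>0. \<forall>n x. HH P g {z} n x \<le> ennreal K"
proof -
  define h where "h x = (SUP n. HH P g A n x)" for x
  have hC: "h x \<le> ennreal C" for x unfolding h_def by (intro SUP_least Hb)
  have hA: "x \<in> A \<Longrightarrow> h x = 0" for x by (simp add: h_def HH_in)
  have h_super: "ennreal (g x) + (\<integral>\<^sup>+y. ennreal (P x y) * h y \<partial>CS) \<le> h x" if "x \<notin> A" for x
  proof -
    have "(\<integral>\<^sup>+y. ennreal (P x y) * h y \<partial>CS) = (\<integral>\<^sup>+y. (SUP n. ennreal (P x y) * HH P g A n y) \<partial>CS)"
      unfolding h_def by (simp add: SUP_mult_left_ennreal)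
    also have "\<dots> = (SUP n. \<integral>\<^sup>+y. ennreal (P x y) * HH P g A n y \<partial>CS)"
      by (rule nn_integral_monotone_convergence_SUP) (auto intro!: incseq_SucI le_funI mult_left_mono HH_inc)
    finally have "ennreal (g x) + (\<integral>\<^sup>+y. ennreal (P x y) * h y \<partial>CS)
        = (SUP n. ennreal (g x) + (\<integral>\<^sup>+y. ennreal (P x y) * HH P g A n y \<partial>CS))"
      by (simp add: ennreal_SUP_add_right)
    also have "\<dots> = (SUP n. HH P g A (Suc n) x)" using that by simp
    also have "\<dots> \<le> h x" unfolding h_def by (intro SUP_least SUP_upper) auto
    finally show ?thesis .
  qed
  have finRA: "finite RA"
  proof -
    have "RA \<subseteq> A \<times> A" by (auto simp: RA_def)
    then show ?thesis using finA finite_subset by blast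
  qed
  define p where "p = Min (insert 1 ((\<lambda>(u,v). P u v) ` RA))"
  have p_pos: "0 < p" unfolding p_def using finRA by (subst Min_gr_iff) (auto simp: RA_def)
  have p_le1: "p \<le> 1" unfolding p_def using finRA by auto
  have p_le: "(u,v) \<in> RA \<Longrightarrow> p \<le> P u v" for u v unfolding p_def using finRA by (intro Min_le) auto
  define q where "q = 2 / p"
  have pq: "p * q = 2" using p_pos by (simp add: q_def)
  have q2: "2 \<le> q" using p_pos p_le1 by (simp add: q_def field_simps)
  define lv where "lv a = (LEAST k. (a,z) \<in> RA ^^ k)" for a
  have lvI: "(a,z) \<in> RA ^^ lv a" if aA: "a \<in> A" for a
  proof -
    obtain k where "(a,z) \<in> RA ^^ k" using conn[OF aA] rtrancl_power by blast
    then show ?thesis unfolding lv_def by (rule LeastI)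
  qed
  have lv_le: "(a,z) \<in> RA ^^ k \<Longrightarrow> lv a \<le> k" for a k unfolding lv_def by (rule Least_le)
  define L where "L = Max (lv ` A)"
  have lvL: "a \<in> A \<Longrightarrow> lv a \<le> L" for a using finA by (simp add: L_def)
  define D where "D = 1 + C + Max (g ` A)"
  have gD: "a \<in> A \<Longrightarrow> g a + C + 1 \<le> D" for a using finA by (simp add: D_def)
  have D_pos: "0 < D" using gD[OF zA] gpos[of z] Cnn by linarith
  define d where "d a = D * q ^ (L - lv a)" for a
  define M where "M = D * q ^ Suc L"
  have d_nn: "0 \<le> d a" for a using D_pos q2 by (simp add: d_def)
  have qL1: "1 \<le> q ^ n" for n using q2 by (simp add: one_le_power)
  have d_le: "d a \<le> D * q ^ L" for a
    unfolding d_def using D_pos q2 by (intro mult_left_mono power_increasing) auto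
  have DL_le_M: "D * q ^ L \<le> M"
    unfolding M_def using D_pos q2 by (intro mult_left_mono power_increasing) auto
  have d_le_M: "d a \<le> M" for a using d_le[of a] DL_le_M by linarith
  have M_nn: "0 \<le> M" using d_nn d_le_M by (meson order_trans)
  define f where "f x = (if x \<in> A then (if x = z then 0 else ennreal (M - d x)) else h x + ennreal M)" for x
  define \<phi> where "\<phi> y = (if y \<in> A then (if y = z then 0 else M - d y) else C + M)" for y
  define \<psi> where "\<psi> y = (if y \<in> A then (if y = z then C + M else C + d y) else 0)" for y
  have \<phi>_nn: "0 \<le> \<phi> y" for y using d_le_M[of y] Cnn M_nn by (simp add: \<phi>_def)
  have \<psi>_nn: "0 \<le> \<psi> y" for y using d_nn[of y] Cnn M_nn by (simp add: \<psi>_def)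
  have \<phi>\<psi>: "\<phi> y + \<psi> y = C + M" for y by (simp add: \<phi>_def \<psi>_def)
  have f_le_h: "f y \<le> h y + ennreal M" for y
  proof (cases "y \<in> A")
    case True
    then show ?thesis using hA[OF True] d_nn[of y] by (auto simp: f_def intro: ennreal_leI)
  next
    case False then show ?thesis by (simp add: f_def)
  qed
  have f_le_\<phi>: "f y \<le> ennreal (\<phi> y)" for y
  proof (cases "y \<in> A")
    case True then show ?thesis by (simp add: f_def \<phi>_def)
  next
    case False
    then have "f y \<le> ennreal C + ennreal M" using hC[of y] by (simp add: f_def add_right_mono)
    then show ?thesis using False Cnn M_nn by (simp add: \<phi>_def ennreal_plus)
  qed
  have super: "ennreal (g x) + (\<integral>\<^sup>+y. ennreal (P x y) * f y \<partial>CS) \<le> f x" if "x \<noteq> z" for x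
  proof (cases "x \<in> A")
    case False
    have "(\<integral>\<^sup>+y. ennreal (P x y) * f y \<partial>CS) \<le> (\<integral>\<^sup>+y. ennreal (P x y) * h y + ennreal (P x y) * ennreal M \<partial>CS)"
      by (intro nn_integral_mono) (simp add: distrib_left[symmetric] mult_left_mono f_le_h)
    also have "\<dots> = (\<integral>\<^sup>+y. ennreal (P x y) * h y \<partial>CS) + (\<integral>\<^sup>+y. ennreal (P x y) * ennreal M \<partial>CS)"
      by (rule nn_integral_add) auto
    also have "\<dots> = (\<integral>\<^sup>+y. ennreal (P x y) * h y \<partial>CS) + ennreal M"
      using Prow[of x] by (simp add: nn_integral_multc)
    finally have "ennreal (g x) + (\<integral>\<^sup>+y. ennreal (P x y) * f y \<partial>CS) \<le> (ennreal (g x) + (\<integral>\<^sup>+y. ennreal (P x y) * h y \<partial>CS)) + ennreal M"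
      by (simp add: add_left_mono add.assoc)
    also have "\<dots> \<le> h x + ennreal M" by (intro add_right_mono h_super False)
    finally show ?thesis using False by (simp add: f_def)
  next
    case xA: True
    have lvx: "(x,z) \<in> RA ^^ lv x" by (rule lvI[OF xA])
    have "lv x \<noteq> 0" using lvx that by (cases "lv x") auto
    then obtain k where k: "lv x = Suc k" by (cases "lv x") auto
    obtain b where xb: "(x,b) \<in> RA" and bz: "(b,z) \<in> RA ^^ k" using relpow_Suc_D2 lvx k by metis
    have bA: "b \<in> A" using xb by (simp add: RA_def)
    have pxb: "p \<le> P x b" by (rule p_le[OF xb])
    have kL: "Suc k \<le> L" using lvL[OF xA] k by simp
    have cond: "g x + C + d x \<le> P x b * \<psi> b"
    proof (cases k)
      case 0
      then have bzz: "b = z" using bz by simp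
      have "p * M \<le> P x b * (C + M)"
        using pxb p_pos M_nn Cnn by (intro mult_mono) auto
      moreover have "p * M = 2 * (D * q ^ L)" using pq by (simp add: M_def algebra_simps)
      moreover have "d x = D * q ^ (L - 1)" using k 0 by (simp add: d_def)
      moreover have "D * q ^ (L - 1) \<le> D * q ^ L"
        using D_pos q2 by (intro mult_left_mono power_increasing) auto
      moreover have "D \<le> D * q ^ L" using D_pos qL1[of L] by simp
      ultimately show ?thesis using gD[OF xA] bzz zA by (simp add: \<psi>_def)
    next
      case (Suc j)
      have bnz: "b \<noteq> z"
      proof
        assume "b = z"
        then have "(x,z) \<in> RA ^^ 1" using xb by simp
        then have "lv x \<le> 1" by (rule lv_le)
        then show False using k Suc by simp
      qed
      have lvb: "lv b \<le> k" by (rule lv_le[OF bz])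
      have "D * q ^ (L - k) \<le> d b"
        unfolding d_def using D_pos q2 lvb kL by (intro mult_left_mono power_increasing) auto
      then have "p * (D * q ^ (L - k)) \<le> P x b * \<psi> b"
        using pxb p_pos D_pos q2 Cnn bA bnz d_nn[of b] by (intro mult_mono) (auto simp: \<psi>_def)
      moreover have "p * (D * q ^ (L - k)) = 2 * (D * q ^ (L - Suc k))"
      proof -
        have "L - k = Suc (L - Suc k)" using kL by simp
        then have "q ^ (L - k) = q * q ^ (L - Suc k)" by simp
        then have "p * (D * q ^ (L - k)) = (p * q) * (D * q ^ (L - Suc k))" by (simp add: algebra_simps)
        then show ?thesis using pq by simp
      qed
      moreover have "d x = D * q ^ (L - Suc k)" using k by (simp add: d_def)
      moreover have "D \<le> D * q ^ (L - Suc k)" using D_pos qL1[of "L - Suc k"] by simp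
      ultimately show ?thesis using gD[OF xA] by linarith
    qed
    define I where "I = (\<integral>\<^sup>+y. ennreal (P x y) * ennreal (\<phi> y) \<partial>CS)"
    define J where "J = (\<integral>\<^sup>+y. ennreal (P x y) * ennreal (\<psi> y) \<partial>CS)"
    have IJ: "I + J = ennreal (C + M)"
    proof -
      have "I + J = (\<integral>\<^sup>+y. ennreal (P x y) * ennreal (\<phi> y) + ennreal (P x y) * ennreal (\<psi> y) \<partial>CS)"
        unfolding I_def J_def by (rule nn_integral_add[symmetric]) auto
      also have "\<dots> = (\<integral>\<^sup>+y. ennreal (P x y) * ennreal (C + M) \<partial>CS)"
        by (intro nn_integral_cong) (simp add: distrib_left[symmetric] ennreal_plus[symmetric] \<phi>_nn \<psi>_nn \<phi>\<psi>)
      also have "\<dots> = ennreal (C + M)" using Prow[of x] by (simp add: nn_integral_multc)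
      finally show ?thesis .
    qed
    have Jb: "ennreal (P x b) * ennreal (\<psi> b) \<le> J"
      unfolding J_def using split_int[of "\<lambda>y. ennreal (P x y) * ennreal (\<psi> y)" b] by simp
    have "I \<le> ennreal (C + M)" using IJ by (metis le_iff_add)
    then obtain i where i: "I = ennreal i" "0 \<le> i" using Cnn M_nn
      by (metis ennreal_cases ennreal_less_top le_less_trans less_irrefl top.not_eq_extremum)
    have "ennreal (i + P x b * \<psi> b) \<le> ennreal (C + M)"
      using IJ Jb i Pnn[of x b] \<psi>_nn[of b] by (metis add_left_mono ennreal_mult ennreal_plus order_trans mult_nonneg_nonneg)
    then have ib: "i + P x b * \<psi> b \<le> C + M" using Cnn M_nn by (subst (asm) ennreal_le_iff) auto
    have "(\<integral>\<^sup>+y. ennreal (P x y) * f y \<partial>CS) \<le> I"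
      unfolding I_def by (intro nn_integral_mono mult_left_mono f_le_\<phi>) simp
    then have "ennreal (g x) + (\<integral>\<^sup>+y. ennreal (P x y) * f y \<partial>CS) \<le> ennreal (g x + i)"
      using i gpos[of x] by (simp add: ennreal_plus add_left_mono)
    also have "\<dots> \<le> ennreal (M - d x)" using ib cond by (intro ennreal_leI) linarith
    finally show ?thesis using xA that by (simp add: f_def)
  qed
  have Hf: "HH P g {z} n x \<le> f x" for n x
  proof (induction n arbitrary: x)
    case 0 then show ?case by simp
  next
    case (Suc n)
    show ?case
    proof (cases "x = z")
      case True then show ?thesis by simp
    next
      case False
      have "(\<integral>\<^sup>+y. ennreal (P x y) * HH P g {z} n y \<partial>CS) \<le> (\<integral>\<^sup>+y. ennreal (P x y) * f y \<partial>CS)"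
        by (intro nn_integral_mono mult_left_mono Suc.IH) simp
      then have "HH P g {z} (Suc n) x \<le> ennreal (g x) + (\<integral>\<^sup>+y. ennreal (P x y) * f y \<partial>CS)"
        using False by (simp add: add_left_mono)
      also have "\<dots> \<le> f x" by (rule super[OF False])
      finally show ?thesis .
    qed
  qed
  have fK: "f x \<le> ennreal (C + M + 1)" for x
  proof -
    have "\<phi> x \<le> C + M + 1" using d_nn[of x] Cnn M_nn by (simp add: \<phi>_def)
    then have "ennreal (\<phi> x) \<le> ennreal (C + M + 1)" by (rule ennreal_leI)
    then show ?thesis using f_le_\<phi>[of x] by (rule order_trans[rotated])
  qed
  show ?thesis
    using Hf fK Cnn M_nn by (intro exI[of _ "C + M + 1"]) (auto intro: order_trans)
qed

end



lemma has_sum_nn: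
  fixes f :: "'a \<Rightarrow> real"
  assumes "(f has_sum S) A" "\<And>x. 0 \<le> f x"
  shows "(\<integral>\<^sup>+x. ennreal (f x) \<partial>count_space A) = ennreal S"
proof -
  have s: "f summable_on A" using assms(1) summable_on_def by blast
  have a: "Infinite_Set_Sum.abs_summable_on f A" using s assms(2) abs_summable_equivalent summable_on_iff_abs_summable_on_real by blast
  have "(\<integral>\<^sup>+x. ennreal (f x) \<partial>count_space A) = ennreal (infsetsum f A)"
    using a assms(2) by (rule nn_integral_conv_infsetsum)
  also have "infsetsum f A = infsum f A" using a by (rule infsetsum_infsum)
  also have "\<dots> = S" using assms(1) by (rule infsumI)
  finally show ?thesis .
qed

definition pi_path :: "('a \<Rightarrow> 'a \<Rightarrow> real) \<Rightarrow> 'a \<Rightarrow> nat \<Rightarrow> (nat \<Rightarrow> 'a) \<Rightarrow> real" where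
  "pi_path Pm x n ys = (if ys 0 = x then 1 else 0) * (\<Prod>k<n. Pm (ys k) (ys (Suc k)))"



lemma jt_Suc: "jump_time \<sigma> (Suc n) \<omega> = jump_time \<sigma> n \<omega> + \<sigma> (Suc n) \<omega>"
  by (simp add: jump_time_def)

lemma jt_eq: "jump_time \<sigma> n \<omega> = (\<Sum>k<n. \<sigma> (Suc k) \<omega>)"
  unfolding jump_time_def using sum_bounds_lt_plus1[of "\<lambda>k. \<sigma> k \<omega>" n] by simp

lemma jt_mono:
  assumes pos: "\<forall>k\<ge>1. 0 \<le> \<sigma> k \<omega>" and "m \<le> n"
  shows "jump_time \<sigma> m \<omega> \<le> jump_time \<sigma> n \<omega>"
  using assms(2)
proof (induction n)
  case 0 then show ?case by simp
next
  case (Suc n)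
  show ?case
  proof (cases "m = Suc n")
    case True then show ?thesis by simp
  next
    case False
    then have "jump_time \<sigma> m \<omega> \<le> jump_time \<sigma> n \<omega>" using Suc by simp
    then show ?thesis using pos by (simp add: jt_Suc add_increasing2)
  qed
qed

lemma jt_strict:
  assumes pos: "\<forall>k\<ge>1. 0 < \<sigma> k \<omega>" and "m < n"
  shows "jump_time \<sigma> m \<omega> < jump_time \<sigma> n \<omega>"
proof -
  have "jump_time \<sigma> m \<omega> \<le> jump_time \<sigma> (n - 1) \<omega>"
    using assms by (intro jt_mono) (auto simp: less_imp_le)
  also have "\<dots> < jump_time \<sigma> n \<omega>"
    using assms jt_Suc[of \<sigma> "n - 1" \<omega>] by (cases n) auto
  finally show ?thesis .
qed

lemma state_Some:
  assumes "ctmc_state jc \<sigma> t \<omega> = Some y"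
  shows "\<exists>m. jump_time \<sigma> m \<omega> \<le> t \<and> jc m \<omega> = y"
proof -
  let ?Q = "\<lambda>n. jump_time \<sigma> n \<omega> \<le> t \<and> t < jump_time \<sigma> (Suc n) \<omega>"
  have ex: "\<exists>n. ?Q n" using assms by (auto simp: ctmc_state_def split: if_splits)
  then have "?Q (LEAST n. ?Q n)" by (rule LeastI_ex)
  moreover have "jc (LEAST n. ?Q n) \<omega> = y" using assms ex by (simp add: ctmc_state_def)
  ultimately show ?thesis by blast
qed

lemma hit_never:
  assumes "\<forall>n. jc n \<omega> \<notin> B"
  shows "hitting_time jc \<sigma> B \<omega> = top"
proof -
  have nin: "ctmc_state jc \<sigma> t \<omega> \<notin> Some ` B" for t
  proof
    assume "ctmc_state jc \<sigma> t \<omega> \<in> Some ` B"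
    then obtain y where "y \<in> B" "ctmc_state jc \<sigma> t \<omega> = Some y" by auto
    then show False using state_Some assms by metis
  qed
  have emp: "{ennreal t | t. t \<ge> 0 \<and> ctmc_state jc \<sigma> t \<omega> \<in> Some ` B} = {}"
    using nin by auto
  show ?thesis unfolding hitting_time_def emp by simp
qed

definition TTg :: "(nat \<Rightarrow> 'w \<Rightarrow> 'a) \<Rightarrow> (nat \<Rightarrow> 'w \<Rightarrow> real) \<Rightarrow> 'a set \<Rightarrow> nat \<Rightarrow> 'w \<Rightarrow> ennreal" where
  "TTg jc \<sigma> B n \<omega> = (\<Sum>k<n. ennreal (\<sigma> (Suc k) \<omega>) * (if \<forall>j\<le>k. jc j \<omega> \<notin> B then 1 else 0))"

lemma TT_le_hit:
  assumes pos: "\<forall>k\<ge>1. 0 \<le> \<sigma> k \<omega>"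
  shows "TTg jc \<sigma> B n \<omega> \<le> hitting_time jc \<sigma> B \<omega>"
  unfolding hitting_time_def
proof (rule Inf_greatest)
  fix u assume "u \<in> {ennreal t | t. t \<ge> 0 \<and> ctmc_state jc \<sigma> t \<omega> \<in> Some ` B}"
  then obtain t where u: "u = ennreal t" and t: "0 \<le> t" and st: "ctmc_state jc \<sigma> t \<omega> \<in> Some ` B" by blast
  from st obtain y where y: "y \<in> B" "ctmc_state jc \<sigma> t \<omega> = Some y" by auto
  then obtain m where m: "jump_time \<sigma> m \<omega> \<le> t" "jc m \<omega> \<in> B" using state_Some by metis
  let ?f = "\<lambda>k. ennreal (\<sigma> (Suc k) \<omega>) * (if \<forall>j\<le>k. jc j \<omega> \<notin> B then 1 else 0)"
  have f0: "?f k = 0" if "m \<le> k" for k using m(2) that by auto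
  have "TTg jc \<sigma> B n \<omega> = (\<Sum>k<n. ?f k)" by (simp add: TTg_def)
  also have "\<dots> \<le> (\<Sum>k<m. ?f k)"
  proof -
    have z: "\<forall>k\<in>{..<n} - ({..<n} \<inter> {..<m}). ?f k = 0"
      by (intro ballI f0) auto
    have "(\<Sum>k<n. ?f k) = (\<Sum>k\<in>{..<n} \<inter> {..<m}. ?f k)"
      by (rule sum.mono_neutral_right[OF _ _ z]) auto
    also have "\<dots> \<le> (\<Sum>k<m. ?f k)" by (rule sum_mono2) auto
    finally show ?thesis .
  qed
  also have "\<dots> \<le> (\<Sum>k<m. ennreal (\<sigma> (Suc k) \<omega>))" by (intro sum_mono) auto
  also have "\<dots> = ennreal (\<Sum>k<m. \<sigma> (Suc k) \<omega>)" using pos by (subst sum_ennreal) auto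
  also have "\<dots> = ennreal (jump_time \<sigma> m \<omega>)" by (simp add: jt_eq)
  also have "\<dots> \<le> ennreal t" using m(1) by (rule ennreal_leI)
  finally show "TTg jc \<sigma> B n \<omega> \<le> u" using u by simp
qed

lemma hit_le_TT:
  assumes pos: "\<forall>k\<ge>1. 0 < \<sigma> k \<omega>" and N: "jc N \<omega> = z"
  shows "hitting_time jc \<sigma> {z} \<omega> \<le> (SUP n. TTg jc \<sigma> {z} n \<omega>)"
proof -
  define N0 where "N0 = (LEAST N. jc N \<omega> = z)"
  have N0: "jc N0 \<omega> = z" unfolding N0_def using N by (rule LeastI)
  have before: "k < N0 \<Longrightarrow> jc k \<omega> \<noteq> z" for k unfolding N0_def by (rule not_less_Least)
  have pos': "\<forall>k\<ge>1. 0 \<le> \<sigma> k \<omega>" using pos by (auto intro: less_imp_le)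
  have TTeq: "TTg jc \<sigma> {z} N0 \<omega> = ennreal (jump_time \<sigma> N0 \<omega>)"
  proof -
    have "TTg jc \<sigma> {z} N0 \<omega> = (\<Sum>k<N0. ennreal (\<sigma> (Suc k) \<omega>))"
      unfolding TTg_def using before by (intro sum.cong) auto
    also have "\<dots> = ennreal (\<Sum>k<N0. \<sigma> (Suc k) \<omega>)" using pos' by (subst sum_ennreal) auto
    finally show ?thesis by (simp add: jt_eq)
  qed
  let ?t = "jump_time \<sigma> N0 \<omega>"
  let ?Q = "\<lambda>n. jump_time \<sigma> n \<omega> \<le> ?t \<and> ?t < jump_time \<sigma> (Suc n) \<omega>"
  have QN0: "?Q N0" using pos jt_Suc[of \<sigma> N0 \<omega>] by auto
  have least: "(LEAST n. ?Q n) = N0"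
  proof (rule Least_equality)
    show "?Q N0" by (rule QN0)
  next
    fix n assume Qn: "?Q n"
    show "N0 \<le> n"
    proof (rule ccontr)
      assume "\<not> N0 \<le> n"
      then have "Suc n \<le> N0" by simp
      then have "jump_time \<sigma> (Suc n) \<omega> \<le> ?t" using pos' by (intro jt_mono) auto
      then show False using Qn by simp
    qed
  qed
  have st: "ctmc_state jc \<sigma> ?t \<omega> = Some z"
    using QN0 least N0 by (auto simp: ctmc_state_def)
  have t0: "0 \<le> ?t" using jt_mono[where \<sigma>=\<sigma> and \<omega>=\<omega> and m=0 and n=N0, OF pos'] by (simp add: jump_time_def)
  have "hitting_time jc \<sigma> {z} \<omega> \<le> ennreal ?t"
    unfolding hitting_time_def using st t0 by (intro Inf_lower) auto
  also have "\<dots> = TTg jc \<sigma> {z} N0 \<omega>" by (simp add: TTeq)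
  also have "\<dots> \<le> (SUP n. TTg jc \<sigma> {z} n \<omega>)" by (rule SUP_upper) simp
  finally show ?thesis .
qed



lemma enlarge:
  fixes P :: "'a \<Rightarrow> 'a \<Rightarrow> real"
  assumes irr: "\<forall>x y. (x,y) \<in> {(u,v). P u v > 0}\<^sup>*" and finA: "finite A"
  shows "\<exists>A'. finite A' \<and> A \<subseteq> A' \<and> z \<in> A' \<and> (\<forall>a\<in>A'. (a,z) \<in> {(u,v). u \<in> A' \<and> v \<in> A' \<and> P u v > 0}\<^sup>*)"
proof -
  define RR where "RR S = {(u,v). u \<in> S \<and> v \<in> S \<and> P u v > 0}" for S
  have RRmono: "S \<subseteq> S' \<Longrightarrow> (RR S)\<^sup>* \<subseteq> (RR S')\<^sup>*" for S S'
    by (intro rtrancl_mono) (auto simp: RR_def)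
  have one: "\<exists>S. finite S \<and> a \<in> S \<and> z \<in> S \<and> (\<forall>b\<in>S. (b,z) \<in> (RR S)\<^sup>*)"
    if "(a,z) \<in> {(u,v). P u v > 0}\<^sup>*" for a
    using that
  proof (induction rule: converse_rtrancl_induct)
    case base
    show ?case by (intro exI[of _ "{z}"]) auto
  next
    case (step a b)
    then obtain S where S: "finite S" "b \<in> S" "z \<in> S" "\<forall>c\<in>S. (c,z) \<in> (RR S)\<^sup>*" by blast
    have sub: "(RR S)\<^sup>* \<subseteq> (RR (insert a S))\<^sup>*" by (rule RRmono) auto
    have ab: "(a,b) \<in> RR (insert a S)" using step(1) S(2) by (auto simp: RR_def)
    have "(a,z) \<in> (RR (insert a S))\<^sup>*"
      using ab S(2,4) sub by (meson converse_rtrancl_into_rtrancl subsetD)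
    then show ?case using S sub by (intro exI[of _ "insert a S"]) auto
  qed
  have "\<forall>a\<in>A. \<exists>S. finite S \<and> a \<in> S \<and> z \<in> S \<and> (\<forall>b\<in>S. (b,z) \<in> (RR S)\<^sup>*)"
    using one irr by blast
  then obtain S where S: "\<And>a. a \<in> A \<Longrightarrow> finite (S a) \<and> a \<in> S a \<and> z \<in> S a \<and> (\<forall>b\<in>S a. (b,z) \<in> (RR (S a))\<^sup>*)"
    by metis
  define A' where "A' = insert z (\<Union>a\<in>A. S a)"
  have "finite A'" using finA S by (simp add: A'_def)
  moreover have "A \<subseteq> A'" using S by (auto simp: A'_def)
  moreover have "z \<in> A'" by (simp add: A'_def)
  moreover have "\<forall>b\<in>A'. (b,z) \<in> (RR A')\<^sup>*"
  proof
    fix b assume "b \<in> A'"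
    then consider "b = z" | a where "a \<in> A" "b \<in> S a" by (auto simp: A'_def)
    then show "(b,z) \<in> (RR A')\<^sup>*"
    proof cases
      case 1 then show ?thesis by simp
    next
      case 2
      have "S a \<subseteq> A'" using 2 by (auto simp: A'_def)
      then show ?thesis using S[OF 2(1)] 2(2) RRmono by blast
    qed
  qed
  ultimately show ?thesis unfolding RR_def by blast
qed

context
  fixes \<Gamma> :: "'a::countable \<Rightarrow> 'a \<Rightarrow> real" and M :: "'a \<Rightarrow> 'w measure"
    and jc :: "nat \<Rightarrow> 'w \<Rightarrow> 'a" and \<sigma> :: "nat \<Rightarrow> 'w \<Rightarrow> real"
  assumes gen: "generator \<Gamma>" and rea: "ctmc_realization \<Gamma> M jc \<sigma>"
begin

lemma rate_pos: "0 < rate \<Gamma> x" using gen by (simp add: generator_def)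

lemma Pnn: "0 \<le> jump_matrix \<Gamma> x y"
  using gen rate_pos[of x] by (auto simp: generator_def jump_matrix_def intro!: divide_nonneg_pos)

lemma Prow: "(\<integral>\<^sup>+y. ennreal (jump_matrix \<Gamma> x y) \<partial>CS) = 1"
proof -
  have h: "(\<Gamma> x has_sum rate \<Gamma> x) (UNIV - {x})" using gen by (simp add: generator_def)
  have "((\<lambda>y. \<Gamma> x y / rate \<Gamma> x) has_sum (rate \<Gamma> x / rate \<Gamma> x)) (UNIV - {x})"
    by (rule has_sum_divide_const[OF h])
  then have "(jump_matrix \<Gamma> x has_sum 1) (UNIV - {x})"
    using rate_pos[of x] by (subst has_sum_cong[where g="\<lambda>y. \<Gamma> x y / rate \<Gamma> x"]) (auto simp: jump_matrix_def)
  then have "(jump_matrix \<Gamma> x has_sum (jump_matrix \<Gamma> x x + 1)) (insert x (UNIV - {x}))"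
    by (intro has_sum_insert) auto
  then have "(jump_matrix \<Gamma> x has_sum 1) UNIV" by (simp add: jump_matrix_def insert_absorb)
  from has_sum_nn[OF this Pnn] show ?thesis by simp
qed

lemma ps: "prob_space (M x)" using rea by (simp add: ctmc_realization_def)
lemma meas_jc[measurable]: "jc n \<in> measurable (M x) (count_space UNIV)" using rea by (simp add: ctmc_realization_def)
lemma meas_sigma[measurable]: "\<sigma> n \<in> borel_measurable (M x)" using rea by (simp add: ctmc_realization_def)

lemma fdd:
  assumes "\<forall>k\<in>{1..n}. ts k \<ge> 0"
  shows "emeasure (M x) {\<omega> \<in> space (M x). (\<forall>k\<le>n. jc k \<omega> = ys k) \<and> (\<forall>k\<in>{1..n}. \<sigma> k \<omega> > ts k)}
    = ennreal ((if ys 0 = x then 1 else 0) *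
             (\<Prod>k<n. jump_matrix \<Gamma> (ys k) (ys (Suc k)) * exp (- rate \<Gamma> (ys k) * ts (Suc k))))"
proof -
  interpret prob_space "M x" by (rule ps)
  have "measure (M x) {\<omega> \<in> space (M x). (\<forall>k\<le>n. jc k \<omega> = ys k) \<and> (\<forall>k\<in>{1..n}. \<sigma> k \<omega> > ts k)}
    = (if ys 0 = x then 1 else 0) *
             (\<Prod>k<n. jump_matrix \<Gamma> (ys k) (ys (Suc k)) * exp (- rate \<Gamma> (ys k) * ts (Suc k)))"
    using rea assms by (simp add: ctmc_realization_def)
  then show ?thesis by (simp add: emeasure_eq_measure)
qed

definition cyl :: "'a \<Rightarrow> nat \<Rightarrow> (nat \<Rightarrow> 'a) \<Rightarrow> 'w set" where
  "cyl x n ys = {\<omega> \<in> space (M x). \<forall>k\<le>n. jc k \<omega> = ys k}"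

definition posn :: "'a \<Rightarrow> nat \<Rightarrow> 'w set" where
  "posn x n = {\<omega> \<in> space (M x). \<forall>k\<in>{1..n}. 0 < \<sigma> k \<omega>}"

lemma cyl_sets[measurable]: "cyl x n ys \<in> sets (M x)"
  unfolding cyl_def by measurable

lemma posn_sets[measurable]: "posn x n \<in> sets (M x)"
  unfolding posn_def by measurable


lemma split_next:
  assumes X[measurable]: "X \<in> sets (M x)"
  shows "emeasure (M x) (cyl x n ys \<inter> X) = (\<integral>\<^sup>+y'. emeasure (M x) (cyl x (Suc n) (ys(Suc n := y')) \<inter> X) \<partial>CS)"
proof -
  have eq: "cyl x n ys \<inter> X = (\<Union>y'\<in>UNIV. cyl x (Suc n) (ys(Suc n := y')) \<inter> X)"
  proof (intro equalityI subsetI)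
    fix \<omega> assume \<omega>: "\<omega> \<in> cyl x n ys \<inter> X"
    then have "\<omega> \<in> cyl x (Suc n) (ys(Suc n := jc (Suc n) \<omega>)) \<inter> X"
      by (auto simp: cyl_def le_Suc_eq)
    then show "\<omega> \<in> (\<Union>y'\<in>UNIV. cyl x (Suc n) (ys(Suc n := y')) \<inter> X)" by blast
  next
    fix \<omega> assume "\<omega> \<in> (\<Union>y'\<in>UNIV. cyl x (Suc n) (ys(Suc n := y')) \<inter> X)"
    then obtain y' where "\<omega> \<in> cyl x (Suc n) (ys(Suc n := y')) \<inter> X" by blast
    then show "\<omega> \<in> cyl x n ys \<inter> X" by (auto simp: cyl_def)
  qed
  have disj: "disjoint_family_on (\<lambda>y'. cyl x (Suc n) (ys(Suc n := y')) \<inter> X) UNIV"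
    by (auto simp: disjoint_family_on_def cyl_def)
  show ?thesis unfolding eq
    by (subst emeasure_UN_countable[OF _ _ disj]) auto
qed

lemma pi_nn: "0 \<le> pi_path (jump_matrix \<Gamma>) x n ys"
  unfolding pi_path_def using Pnn by (auto intro!: prod_nonneg)

lemma pi_Suc: "pi_path Pm x (Suc n) (ys(Suc n := y')) = pi_path Pm x n ys * Pm (ys n) y'"
proof -
  have "(\<Prod>k<n. Pm ((ys(Suc n := y')) k) ((ys(Suc n := y')) (Suc k))) = (\<Prod>k<n. Pm (ys k) (ys (Suc k)))"
    by (intro prod.cong) auto
  then show ?thesis by (simp add: pi_path_def)
qed

lemma fdd_tail:
  assumes t: "0 \<le> t"
  shows "emeasure (M x) (cyl x n ys \<inter> (posn x n \<inter> {\<omega>\<in>space (M x). t < \<sigma> (Suc n) \<omega>}))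
    = ennreal (pi_path (jump_matrix \<Gamma>) x n ys * exp (- rate \<Gamma> (ys n) * t))"
proof -
  define ts where "ts k = (if k = Suc n then t else 0)" for k
  have tsnn: "\<forall>k\<in>{1..Suc n}. ts k \<ge> 0" using t by (simp add: ts_def)
  have each: "emeasure (M x) (cyl x (Suc n) (ys(Suc n := y')) \<inter> (posn x n \<inter> {\<omega>\<in>space (M x). t < \<sigma> (Suc n) \<omega>}))
      = ennreal (pi_path (jump_matrix \<Gamma>) x n ys * exp (- rate \<Gamma> (ys n) * t)) * ennreal (jump_matrix \<Gamma> (ys n) y')" for y'
  proof -
    let ?ys = "ys(Suc n := y')"
    have seteq: "cyl x (Suc n) ?ys \<inter> (posn x n \<inter> {\<omega>\<in>space (M x). t < \<sigma> (Suc n) \<omega>})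
       = {\<omega> \<in> space (M x). (\<forall>k\<le>Suc n. jc k \<omega> = ?ys k) \<and> (\<forall>k\<in>{1..Suc n}. \<sigma> k \<omega> > ts k)}"
      by (auto simp: cyl_def posn_def ts_def le_Suc_eq)
    have prodeq: "(\<Prod>k<Suc n. jump_matrix \<Gamma> (?ys k) (?ys (Suc k)) * exp (- rate \<Gamma> (?ys k) * ts (Suc k)))
      = (\<Prod>k<n. jump_matrix \<Gamma> (ys k) (ys (Suc k))) * (jump_matrix \<Gamma> (ys n) y' * exp (- rate \<Gamma> (ys n) * t))"
    proof -
      have "(\<Prod>k<n. jump_matrix \<Gamma> (?ys k) (?ys (Suc k)) * exp (- rate \<Gamma> (?ys k) * ts (Suc k)))
          = (\<Prod>k<n. jump_matrix \<Gamma> (ys k) (ys (Suc k)))"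
        by (intro prod.cong) (auto simp: ts_def)
      then show ?thesis by (simp add: ts_def)
    qed
    have eq1: "(if ?ys 0 = x then 1 else 0) * ((\<Prod>k<n. jump_matrix \<Gamma> (ys k) (ys (Suc k))) * (jump_matrix \<Gamma> (ys n) y' * exp (- rate \<Gamma> (ys n) * t)))
       = (pi_path (jump_matrix \<Gamma>) x n ys * exp (- rate \<Gamma> (ys n) * t)) * jump_matrix \<Gamma> (ys n) y'"
      by (simp add: pi_path_def)
    have nn: "0 \<le> pi_path (jump_matrix \<Gamma>) x n ys * exp (- rate \<Gamma> (ys n) * t)"
      using pi_nn[of x n ys] by simp
    show ?thesis
      unfolding seteq fdd[OF tsnn] prodeq eq1
      by (rule ennreal_mult[OF nn Pnn])
  qed
  have "emeasure (M x) (cyl x n ys \<inter> (posn x n \<inter> {\<omega>\<in>space (M x). t < \<sigma> (Suc n) \<omega>}))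
     = (\<integral>\<^sup>+y'. ennreal (pi_path (jump_matrix \<Gamma>) x n ys * exp (- rate \<Gamma> (ys n) * t)) * ennreal (jump_matrix \<Gamma> (ys n) y') \<partial>CS)"
    by (subst split_next) (auto simp: each)
  also have "\<dots> = ennreal (pi_path (jump_matrix \<Gamma>) x n ys * exp (- rate \<Gamma> (ys n) * t))"
    by (simp add: nn_integral_cmult Prow)
  finally show ?thesis .
qed

lemma fdd_pos: "emeasure (M x) (cyl x n ys \<inter> posn x n) = ennreal (pi_path (jump_matrix \<Gamma>) x n ys)"
proof -
  have seteq: "cyl x n ys \<inter> posn x n
       = {\<omega> \<in> space (M x). (\<forall>k\<le>n. jc k \<omega> = ys k) \<and> (\<forall>k\<in>{1..n}. \<sigma> k \<omega> > (\<lambda>_. 0) k)}"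
    by (auto simp: cyl_def posn_def)
  show ?thesis unfolding seteq by (subst fdd) (auto simp: pi_path_def)
qed


lemma null_step:
  "emeasure (M x) (cyl x n ys \<inter> posn x n \<inter> {\<omega>\<in>space (M x). \<sigma> (Suc n) \<omega> \<le> 0}) = 0"
proof -
  interpret prob_space "M x" by (rule ps)
  have eq: "cyl x n ys \<inter> posn x n \<inter> {\<omega>\<in>space (M x). \<sigma> (Suc n) \<omega> \<le> 0}
      = (cyl x n ys \<inter> posn x n) - (cyl x n ys \<inter> (posn x n \<inter> {\<omega>\<in>space (M x). 0 < \<sigma> (Suc n) \<omega>}))"
    by (auto simp: cyl_def)
  have "emeasure (M x) ((cyl x n ys \<inter> posn x n) - (cyl x n ys \<inter> (posn x n \<inter> {\<omega>\<in>space (M x). 0 < \<sigma> (Suc n) \<omega>})))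
     = emeasure (M x) (cyl x n ys \<inter> posn x n) - emeasure (M x) (cyl x n ys \<inter> (posn x n \<inter> {\<omega>\<in>space (M x). 0 < \<sigma> (Suc n) \<omega>}))"
    by (rule emeasure_Diff) auto
  also have "\<dots> = 0" using fdd_pos[of x n ys] fdd_tail[of 0 x n ys] by simp
  finally show ?thesis unfolding eq .
qed

lemma AE_posn: "AE \<omega> in M x. \<forall>k\<in>{1..n}. 0 < \<sigma> k \<omega>"
proof (induction n)
  case 0 then show ?case by simp
next
  case (Suc n)
  let ?N = "\<lambda>ys. cyl x n ys \<inter> posn x n \<inter> {\<omega>\<in>space (M x). \<sigma> (Suc n) \<omega> \<le> 0}"
  have cntbl: "countable (PiE {..n} (\<lambda>_. UNIV :: 'a set))"
    by (intro countable_PiE) auto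
  have null: "(\<Union>ys\<in>PiE {..n} (\<lambda>_. UNIV). ?N ys) \<in> null_sets (M x)"
    using cntbl by (intro null_sets_UN') (auto simp: null_step)
  have "AE \<omega> in M x. (\<forall>k\<in>{1..n}. 0 < \<sigma> k \<omega>) \<longrightarrow> 0 < \<sigma> (Suc n) \<omega>"
  proof (rule AE_I'[OF null], intro subsetI)
    fix \<omega> assume \<omega>: "\<omega> \<in> {\<omega> \<in> space (M x). \<not> ((\<forall>k\<in>{1..n}. 0 < \<sigma> k \<omega>) \<longrightarrow> 0 < \<sigma> (Suc n) \<omega>)}"
    let ?ys = "restrict (\<lambda>k. jc k \<omega>) {..n}"
    have "?ys \<in> PiE {..n} (\<lambda>_. UNIV)" by simp
    moreover have "\<omega> \<in> ?N ?ys" using \<omega> by (auto simp: cyl_def posn_def)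
    ultimately show "\<omega> \<in> (\<Union>ys\<in>PiE {..n} (\<lambda>_. UNIV). ?N ys)" by blast
  qed
  with Suc.IH show ?case
    by eventually_elim (auto simp: le_Suc_eq)
qed

lemma AE_pos: "AE \<omega> in M x. \<forall>k\<ge>1. 0 < \<sigma> k \<omega>"
proof -
  have "AE \<omega> in M x. \<forall>n. \<forall>k\<in>{1..n}. 0 < \<sigma> k \<omega>"
    using AE_posn by (subst AE_all_countable) auto
  then show ?thesis by eventually_elim (meson atLeastAtMost_iff order_refl)
qed

lemma cyl_prob: "emeasure (M x) (cyl x n ys) = ennreal (pi_path (jump_matrix \<Gamma>) x n ys)"
proof -
  have "emeasure (M x) (cyl x n ys) = emeasure (M x) (cyl x n ys \<inter> posn x n)"
    by (rule emeasure_eq_AE) (use AE_posn[where x=x and n=n] in \<open>auto simp: posn_def\<close>)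
  then show ?thesis using fdd_pos by simp
qed

lemma cyl_tail:
  assumes "0 \<le> t"
  shows "emeasure (M x) (cyl x n ys \<inter> {\<omega>\<in>space (M x). t < \<sigma> (Suc n) \<omega>})
    = ennreal (exp (- rate \<Gamma> (ys n) * t)) * emeasure (M x) (cyl x n ys)"
proof -
  have "emeasure (M x) (cyl x n ys \<inter> {\<omega>\<in>space (M x). t < \<sigma> (Suc n) \<omega>})
      = emeasure (M x) (cyl x n ys \<inter> (posn x n \<inter> {\<omega>\<in>space (M x). t < \<sigma> (Suc n) \<omega>}))"
    by (rule emeasure_eq_AE) (use AE_posn[where x=x and n=n] in \<open>auto simp: posn_def\<close>)
  also have "\<dots> = ennreal (pi_path (jump_matrix \<Gamma>) x n ys * exp (- rate \<Gamma> (ys n) * t))"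
    by (rule fdd_tail[OF assms])
  also have "\<dots> = ennreal (exp (- rate \<Gamma> (ys n) * t)) * emeasure (M x) (cyl x n ys)"
    using pi_nn[of x n ys] by (simp add: cyl_prob ennreal_mult mult.commute)
  finally show ?thesis .
qed

lemma cyl_next:
  "emeasure (M x) (cyl x n ys \<inter> {\<omega>\<in>space (M x). jc (Suc n) \<omega> = y'})
    = ennreal (jump_matrix \<Gamma> (ys n) y') * emeasure (M x) (cyl x n ys)"
proof -
  have "cyl x n ys \<inter> {\<omega>\<in>space (M x). jc (Suc n) \<omega> = y'} = cyl x (Suc n) (ys(Suc n := y'))"
    by (auto simp: cyl_def le_Suc_eq)
  then show ?thesis
    using pi_nn[of x n ys] Pnn[of "ys n" y']
    by (simp add: cyl_prob pi_Suc ennreal_mult mult.commute)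
qed


lemma cyl_disj:
  assumes "ys1 \<in> PiE {..n} (\<lambda>_. UNIV)" "ys2 \<in> PiE {..n} (\<lambda>_. UNIV)" "ys1 \<noteq> ys2"
  shows "cyl x n ys1 \<inter> cyl x n ys2 = {}"
proof -
  obtain k where "k \<le> n" "ys1 k \<noteq> ys2 k"
    using assms PiE_ext[of ys1 "{..n}" "\<lambda>_. UNIV" ys2] by auto
  then show ?thesis by (auto simp: cyl_def)
qed

lemma lift:
  assumes S: "S \<subseteq> PiE {..n} (\<lambda>_. UNIV)" and X[measurable]: "X \<in> sets (M x)"
    and c: "\<And>ys. ys \<in> S \<Longrightarrow> emeasure (M x) (cyl x n ys \<inter> X) = c * emeasure (M x) (cyl x n ys)"
  shows "emeasure (M x) ((\<Union>ys\<in>S. cyl x n ys) \<inter> X) = c * emeasure (M x) (\<Union>ys\<in>S. cyl x n ys)"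
proof -
  have cntbl: "countable S"
    by (rule countable_subset[OF S]) (intro countable_PiE, auto)
  have disj1: "disjoint_family_on (\<lambda>ys. cyl x n ys) S"
    unfolding disjoint_family_on_def using S cyl_disj by blast
  have disj2: "disjoint_family_on (\<lambda>ys. cyl x n ys \<inter> X) S"
    unfolding disjoint_family_on_def using S cyl_disj by blast
  have "emeasure (M x) ((\<Union>ys\<in>S. cyl x n ys) \<inter> X) = emeasure (M x) (\<Union>ys\<in>S. cyl x n ys \<inter> X)"
    by (simp add: Int_UN_distrib2)
  also have "\<dots> = (\<integral>\<^sup>+ys. emeasure (M x) (cyl x n ys \<inter> X) \<partial>count_space S)"
    by (rule emeasure_UN_countable[OF _ cntbl disj2]) auto
  also have "\<dots> = (\<integral>\<^sup>+ys. c * emeasure (M x) (cyl x n ys) \<partial>count_space S)"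
    by (rule nn_integral_cong) (simp add: c)
  also have "\<dots> = c * (\<integral>\<^sup>+ys. emeasure (M x) (cyl x n ys) \<partial>count_space S)"
    by (rule nn_integral_cmult) simp
  also have "(\<integral>\<^sup>+ys. emeasure (M x) (cyl x n ys) \<partial>count_space S) = emeasure (M x) (\<Union>ys\<in>S. cyl x n ys)"
    by (rule emeasure_UN_countable[OF _ cntbl disj1, symmetric]) auto
  finally show ?thesis .
qed

definition kill :: "'a \<Rightarrow> 'a set \<Rightarrow> nat \<Rightarrow> 'a \<Rightarrow> 'w set" where
  "kill x B n y = {\<omega>\<in>space (M x). jc n \<omega> = y \<and> (\<forall>k<n. jc k \<omega> \<notin> B)}"

definition KS :: "'a set \<Rightarrow> nat \<Rightarrow> 'a \<Rightarrow> (nat \<Rightarrow> 'a) set" where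
  "KS B n y = {ys \<in> PiE {..n} (\<lambda>_. UNIV). ys n = y \<and> (\<forall>k<n. ys k \<notin> B)}"

lemma kill_sets[measurable]: "kill x B n y \<in> sets (M x)"
  unfolding kill_def by measurable

lemma kill_UN: "kill x B n y = (\<Union>ys\<in>KS B n y. cyl x n ys)"
proof (intro equalityI subsetI)
  fix \<omega> assume \<omega>: "\<omega> \<in> kill x B n y"
  let ?ys = "restrict (\<lambda>k. jc k \<omega>) {..n}"
  have "?ys \<in> KS B n y" using \<omega> by (auto simp: KS_def kill_def)
  moreover have "\<omega> \<in> cyl x n ?ys" using \<omega> by (auto simp: cyl_def kill_def)
  ultimately show "\<omega> \<in> (\<Union>ys\<in>KS B n y. cyl x n ys)" by blast
next
  fix \<omega> assume "\<omega> \<in> (\<Union>ys\<in>KS B n y. cyl x n ys)"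
  then obtain ys where "ys \<in> KS B n y" "\<omega> \<in> cyl x n ys" by blast
  then show "\<omega> \<in> kill x B n y" by (auto simp: KS_def kill_def cyl_def)
qed

lemma KS_sub: "KS B n y \<subseteq> PiE {..n} (\<lambda>_. UNIV)" by (auto simp: KS_def)

lemma kill_next:
  "emeasure (M x) (kill x B n y \<inter> {\<omega>\<in>space (M x). jc (Suc n) \<omega> = y'})
    = ennreal (jump_matrix \<Gamma> y y') * emeasure (M x) (kill x B n y)"
  unfolding kill_UN
  by (rule lift[OF KS_sub]) (auto simp: cyl_next KS_def)

lemma kill_tail:
  assumes "0 \<le> t"
  shows "emeasure (M x) (kill x B n y \<inter> {\<omega>\<in>space (M x). t < \<sigma> (Suc n) \<omega>})
    = ennreal (exp (- rate \<Gamma> y * t)) * emeasure (M x) (kill x B n y)"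
  unfolding kill_UN
  by (rule lift[OF KS_sub]) (auto simp: cyl_tail[OF assms] KS_def)

lemma kill_mu: "emeasure (M x) (kill x B n y) = mu (jump_matrix \<Gamma>) B n x y"
proof (induction n arbitrary: y)
  case 0
  have "kill x B 0 y = cyl x 0 (\<lambda>_. y)" by (auto simp: kill_def cyl_def)
  then show ?case by (simp add: cyl_prob pi_path_def)
next
  case (Suc n y')
  let ?X = "\<lambda>y. if y \<in> B then {} else kill x B n y \<inter> {\<omega>\<in>space (M x). jc (Suc n) \<omega> = y'}"
  have eq: "kill x B (Suc n) y' = (\<Union>y\<in>UNIV. ?X y)"
    by (auto simp: kill_def less_Suc_eq split: if_splits)
  have disj: "disjoint_family_on ?X UNIV"
    by (auto simp: disjoint_family_on_def kill_def)
  have "emeasure (M x) (kill x B (Suc n) y') = (\<integral>\<^sup>+y. emeasure (M x) (?X y) \<partial>CS)"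
    unfolding eq by (rule emeasure_UN_countable[OF _ _ disj]) auto
  also have "\<dots> = (\<integral>\<^sup>+y. (if y \<in> B then 0 else mu (jump_matrix \<Gamma>) B n x y * ennreal (jump_matrix \<Gamma> y y')) \<partial>CS)"
    by (rule nn_integral_cong) (simp add: kill_next Suc.IH mult.commute)
  also have "\<dots> = mu (jump_matrix \<Gamma>) B (Suc n) x y'" by (rule mu_fwd[symmetric])
  finally show ?case .
qed


lemma exp_int:
  fixes r :: real assumes r: "0 < r"
  shows "(\<integral>\<^sup>+t. indicator {0..} t * ennreal (exp (- r * t)) \<partial>lborel) = ennreal (1 / r)"
proof -
  interpret prob_space "density lborel (exponential_density r)"
    by (rule prob_space_exponential_density[OF r])
  have "1 = emeasure (density lborel (exponential_density r)) UNIV"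
    using emeasure_space_1 by simp
  also have "\<dots> = (\<integral>\<^sup>+t. ennreal (exponential_density r t) \<partial>lborel)"
    by (subst emeasure_density) auto
  also have "\<dots> = (\<integral>\<^sup>+t. ennreal r * (indicator {0..} t * ennreal (exp (- r * t))) \<partial>lborel)"
    using r by (intro nn_integral_cong) (auto simp: exponential_density_def ennreal_mult mult.commute split: split_indicator)
  also have "\<dots> = ennreal r * (\<integral>\<^sup>+t. indicator {0..} t * ennreal (exp (- r * t)) \<partial>lborel)"
    by (rule nn_integral_cmult) simp
  finally have 1: "ennreal r * (\<integral>\<^sup>+t. indicator {0..} t * ennreal (exp (- r * t)) \<partial>lborel) = 1" by simp
  define X where "X = (\<integral>\<^sup>+t. indicator {0..} t * ennreal (exp (- r * t)) \<partial>lborel)"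
  have "X = (X * ennreal r) / ennreal r"
    by (rule mult_divide_eq_ennreal[symmetric]) (use r in auto)
  also have "\<dots> = 1 / ennreal r" using 1 by (simp add: X_def mult.commute)
  also have "\<dots> = ennreal 1 / ennreal r" by simp
  also have "\<dots> = ennreal (1 / r)" using r by (rule divide_ennreal[rotated]) simp
  finally show ?thesis by (simp add: X_def)
qed


lemma sigma_exp:
  assumes E[measurable]: "E \<in> sets (M x)" and r: "0 < r"
    and tail: "\<And>t. 0 \<le> t \<Longrightarrow> emeasure (M x) (E \<inter> {\<omega>\<in>space (M x). t < \<sigma> m \<omega>}) = ennreal (exp (- r * t)) * emeasure (M x) E"
  shows "(\<integral>\<^sup>+\<omega>. ennreal (\<sigma> m \<omega>) * indicator E \<omega> \<partial>M x) = emeasure (M x) E * ennreal (1 / r)"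
proof -
  interpret prob_space "M x" by (rule ps)
  interpret pair_sigma_finite "M x" lborel
    by (rule pair_sigma_finite.intro) (auto intro: prob_space_imp_sigma_finite ps lborel.sigma_finite_measure_axioms)
  define f where "f \<omega> t = (if \<omega> \<in> E \<and> 0 \<le> t \<and> t < \<sigma> m \<omega> then 1 else 0 :: ennreal)" for \<omega> t
  have fm: "case_prod f \<in> borel_measurable (M x \<Otimes>\<^sub>M lborel)" unfolding f_def by measurable
  have inner1: "(\<integral>\<^sup>+t. f \<omega> t \<partial>lborel) = ennreal (\<sigma> m \<omega>) * indicator E \<omega>" for \<omega>
  proof (cases "\<omega> \<in> E \<and> 0 \<le> \<sigma> m \<omega>")
    case True
    have "(\<integral>\<^sup>+t. f \<omega> t \<partial>lborel) = (\<integral>\<^sup>+t. indicator {0..<\<sigma> m \<omega>} t \<partial>lborel)"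
      using True by (intro nn_integral_cong) (auto simp: f_def split: split_indicator)
    also have "\<dots> = ennreal (\<sigma> m \<omega>)" using True by simp
    finally show ?thesis using True by simp
  next
    case False
    have "(\<integral>\<^sup>+t. f \<omega> t \<partial>lborel) = (\<integral>\<^sup>+(t::real). 0 \<partial>lborel)"
      using False by (intro nn_integral_cong) (auto simp: f_def)
    then show ?thesis using False by (auto simp: ennreal_neg)
  qed
  have inner2: "(\<integral>\<^sup>+\<omega>. f \<omega> t \<partial>M x) = indicator {0..} t * ennreal (exp (- r * t)) * emeasure (M x) E" for t
  proof (cases "0 \<le> t")
    case True
    have "(\<integral>\<^sup>+\<omega>. f \<omega> t \<partial>M x) = (\<integral>\<^sup>+\<omega>. indicator (E \<inter> {\<omega>\<in>space (M x). t < \<sigma> m \<omega>}) \<omega> \<partial>M x)"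
      using True sets.sets_into_space[OF E] by (intro nn_integral_cong) (auto simp: f_def split: split_indicator)
    also have "\<dots> = emeasure (M x) (E \<inter> {\<omega>\<in>space (M x). t < \<sigma> m \<omega>})" by simp
    finally show ?thesis using True tail[OF True] by simp
  next
    case False
    have "(\<integral>\<^sup>+\<omega>. f \<omega> t \<partial>M x) = (\<integral>\<^sup>+\<omega>. 0 \<partial>M x)"
      using False by (intro nn_integral_cong) (auto simp: f_def)
    then show ?thesis using False by simp
  qed
  have "(\<integral>\<^sup>+\<omega>. ennreal (\<sigma> m \<omega>) * indicator E \<omega> \<partial>M x) = (\<integral>\<^sup>+\<omega>. (\<integral>\<^sup>+t. f \<omega> t \<partial>lborel) \<partial>M x)"
    by (simp add: inner1)
  also have "\<dots> = (\<integral>\<^sup>+t. (\<integral>\<^sup>+\<omega>. f \<omega> t \<partial>M x) \<partial>lborel)"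
    by (rule Fubini'[OF fm, symmetric])
  also have "\<dots> = (\<integral>\<^sup>+t. (indicator {0..} t * ennreal (exp (- r * t))) * emeasure (M x) E \<partial>lborel)"
    by (simp add: inner2)
  also have "\<dots> = (\<integral>\<^sup>+t. indicator {0..} t * ennreal (exp (- r * t)) \<partial>lborel) * emeasure (M x) E"
    by (rule nn_integral_multc) simp
  also have "\<dots> = emeasure (M x) E * ennreal (1 / r)" by (subst exp_int[OF r]) (rule mult.commute)
  finally show ?thesis .
qed


definition TT :: "'a set \<Rightarrow> nat \<Rightarrow> 'w \<Rightarrow> ennreal" where
  "TT B n \<omega> = (\<Sum>k<n. ennreal (\<sigma> (Suc k) \<omega>) * (if \<forall>j\<le>k. jc j \<omega> \<notin> B then 1 else 0))"

lemma kill_sigma: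
  "(\<integral>\<^sup>+\<omega>. ennreal (\<sigma> (Suc k) \<omega>) * indicator (kill x B k y) \<omega> \<partial>M x)
    = mu (jump_matrix \<Gamma>) B k x y * ennreal (1 / rate \<Gamma> y)"
proof -
  have "(\<integral>\<^sup>+\<omega>. ennreal (\<sigma> (Suc k) \<omega>) * indicator (kill x B k y) \<omega> \<partial>M x)
      = emeasure (M x) (kill x B k y) * ennreal (1 / rate \<Gamma> y)"
    by (rule sigma_exp[OF kill_sets rate_pos kill_tail])
  then show ?thesis by (simp add: kill_mu)
qed

lemma ET: "(\<integral>\<^sup>+\<omega>. TT B n \<omega> \<partial>M x) = HH (jump_matrix \<Gamma>) (\<lambda>y. 1 / rate \<Gamma> y) B n x"
proof -
  have ind: "(if \<forall>j\<le>k. jc j \<omega> \<notin> B then 1 else 0) = (\<integral>\<^sup>+y. (if y \<in> B then 0 else indicator (kill x B k y) \<omega>) \<partial>CS)"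
    if \<omega>: "\<omega> \<in> space (M x)" for \<omega> k
  proof -
    have "(\<integral>\<^sup>+y. (if y \<in> B then 0 else indicator (kill x B k y) \<omega>) \<partial>CS)
        = (\<integral>\<^sup>+y. (if y = jc k \<omega> then (if \<forall>j\<le>k. jc j \<omega> \<notin> B then 1 else 0) else 0) \<partial>CS)"
      using \<omega> by (intro nn_integral_cong) (auto simp: kill_def le_less split: split_indicator)
    also have "\<dots> = (if \<forall>j\<le>k. jc j \<omega> \<notin> B then 1 else 0)" by (rule int_single)
    finally show ?thesis by simp
  qed
  have per_k: "(\<integral>\<^sup>+\<omega>. ennreal (\<sigma> (Suc k) \<omega>) * (if \<forall>j\<le>k. jc j \<omega> \<notin> B then 1 else 0) \<partial>M x)
     = (\<integral>\<^sup>+y. (if y \<in> B then 0 else ennreal (1 / rate \<Gamma> y) * mu (jump_matrix \<Gamma>) B k x y) \<partial>CS)" for k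
  proof -
    have "(\<integral>\<^sup>+\<omega>. ennreal (\<sigma> (Suc k) \<omega>) * (if \<forall>j\<le>k. jc j \<omega> \<notin> B then 1 else 0) \<partial>M x)
       = (\<integral>\<^sup>+\<omega>. \<integral>\<^sup>+y. ennreal (\<sigma> (Suc k) \<omega>) * (if y \<in> B then 0 else indicator (kill x B k y) \<omega>) \<partial>CS \<partial>M x)"
      by (rule nn_integral_cong) (simp add: ind nn_integral_cmult)
    also have "\<dots> = (\<integral>\<^sup>+y. \<integral>\<^sup>+\<omega>. ennreal (\<sigma> (Suc k) \<omega>) * (if y \<in> B then 0 else indicator (kill x B k y) \<omega>) \<partial>M x \<partial>CS)"
      by (rule nn_integral_count_space_nn_integral) auto
    also have "\<dots> = (\<integral>\<^sup>+y. (if y \<in> B then 0 else ennreal (1 / rate \<Gamma> y) * mu (jump_matrix \<Gamma>) B k x y) \<partial>CS)"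
    proof (rule nn_integral_cong)
      fix y
      show "(\<integral>\<^sup>+\<omega>. ennreal (\<sigma> (Suc k) \<omega>) * (if y \<in> B then 0 else indicator (kill x B k y) \<omega>) \<partial>M x)
          = (if y \<in> B then 0 else ennreal (1 / rate \<Gamma> y) * mu (jump_matrix \<Gamma>) B k x y)"
        by (cases "y \<in> B") (simp_all add: kill_sigma mult.commute)
    qed
    finally show ?thesis .
  qed
  have "(\<integral>\<^sup>+\<omega>. TT B n \<omega> \<partial>M x)
     = (\<Sum>k<n. \<integral>\<^sup>+\<omega>. ennreal (\<sigma> (Suc k) \<omega>) * (if \<forall>j\<le>k. jc j \<omega> \<notin> B then 1 else 0) \<partial>M x)"
    unfolding TT_def by (rule nn_integral_sum) measurable
  also have "\<dots> = HH (jump_matrix \<Gamma>) (\<lambda>y. 1 / rate \<Gamma> y) B n x"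
    by (simp add: per_k HH_mu)
  finally show ?thesis .
qed


lemma TT_eq: "TT B n \<omega> = (\<Sum>k<n. ennreal (\<sigma> (Suc k) \<omega>) * (if \<forall>j\<le>k. jc j \<omega> \<notin> B then 1 else 0))"
  by (simp add: TT_def)

lemma kill_iff: "\<omega> \<in> kill x B n y \<longleftrightarrow> \<omega> \<in> space (M x) \<and> jc n \<omega> = y \<and> (\<forall>k<n. jc k \<omega> \<notin> B)"
  by (simp add: kill_def)




lemma E_TT: "(\<integral>\<^sup>+\<omega>. TTg jc \<sigma> B n \<omega> \<partial>M x) = HH (jump_matrix \<Gamma>) (\<lambda>y. 1 / rate \<Gamma> y) B n x"
proof -
  have "TTg jc \<sigma> B n = TT B n" by (simp add: fun_eq_iff TTg_def TT_eq)
  then show ?thesis using ET by simp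
qed

lemma avoid_prob: "emeasure (M x) {\<omega>\<in>space (M x). \<forall>k<n. jc k \<omega> \<notin> B} = QQ (jump_matrix \<Gamma>) B n x"
proof -
  have eq: "{\<omega>\<in>space (M x). \<forall>k<n. jc k \<omega> \<notin> B} = (\<Union>y\<in>UNIV. kill x B n y)"
    by (auto simp: kill_iff)
  have disj: "disjoint_family_on (kill x B n) UNIV"
    by (auto simp: disjoint_family_on_def kill_iff)
  have "emeasure (M x) {\<omega>\<in>space (M x). \<forall>k<n. jc k \<omega> \<notin> B} = (\<integral>\<^sup>+y. emeasure (M x) (kill x B n y) \<partial>CS)"
    unfolding eq by (rule emeasure_UN_countable[OF _ _ disj]) (auto intro: kill_sets)
  also have "\<dots> = (\<integral>\<^sup>+y. mu (jump_matrix \<Gamma>) B n x y \<partial>CS)"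
    by (simp add: kill_mu)
  also have "\<dots> = QQ (jump_matrix \<Gamma>) B n x" by (rule QQ_mu[symmetric])
  finally show ?thesis .
qed


lemma INF_QQ: "(INF n. QQ (jump_matrix \<Gamma>) B n x) = emeasure (M x) {\<omega>\<in>space (M x). \<forall>k. jc k \<omega> \<notin> B}"
proof -
  interpret prob_space "M x" by (rule ps)
  define S where "S n = {\<omega>\<in>space (M x). \<forall>k<n. jc k \<omega> \<notin> B}" for n
  have Sm: "S n \<in> sets (M x)" for n unfolding S_def by measurable
  have Sdec: "decseq S" unfolding decseq_def S_def by auto
  have 1: "(INF n. QQ (jump_matrix \<Gamma>) B n x) = (INF n. emeasure (M x) (S n))"
    unfolding S_def avoid_prob by (rule refl)
  have 2: "(INF n. emeasure (M x) (S n)) = emeasure (M x) (\<Inter>n. S n)"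
    by (rule INF_emeasure_decseq[OF _ Sdec]) (use Sm in \<open>blast, simp\<close>)
  have 3: "(\<Inter>n. S n) = {\<omega>\<in>space (M x). \<forall>k. jc k \<omega> \<notin> B}"
  proof (intro equalityI subsetI)
    fix \<omega> assume "\<omega> \<in> (\<Inter>n. S n)"
    then have "\<omega> \<in> S (Suc k)" for k by blast
    then show "\<omega> \<in> {\<omega>\<in>space (M x). \<forall>k. jc k \<omega> \<notin> B}" unfolding S_def by blast
  next
    fix \<omega> assume "\<omega> \<in> {\<omega>\<in>space (M x). \<forall>k. jc k \<omega> \<notin> B}"
    then show "\<omega> \<in> (\<Inter>n. S n)" unfolding S_def by blast
  qed
  show ?thesis using 1 2 3 by simp
qed

lemma TTg_meas[measurable]: "TTg jc \<sigma> B n \<in> borel_measurable (M x)"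
  unfolding TTg_def by measurable

lemma TTg_inc: "incseq (\<lambda>n. TTg jc \<sigma> B n)"
  by (intro incseq_SucI le_funI) (simp add: TTg_def)

lemma main:
  assumes irr: "jump_irreducible \<Gamma>" and finA: "finite A" and Cpos: "C > 0"
    and hyp: "\<forall>x. expected_hitting_time M jc \<sigma> x A \<le> ennreal C"
  shows "implodes_towards M jc \<sigma> {z}"
proof -
  let ?P = "jump_matrix \<Gamma>"
  let ?g = "\<lambda>y. 1 / rate \<Gamma> y"
  have Pnn: "\<And>x y. 0 \<le> ?P x y" by (rule Pnn)
  have Prow: "\<And>x. (\<integral>\<^sup>+y. ennreal (?P x y) \<partial>CS) = 1" by (rule Prow)
  have AEpos: "\<And>x. AE \<omega> in M x. \<forall>k\<ge>1. 0 < \<sigma> k \<omega>" by (rule AE_pos)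
  have gpos: "\<And>y. 0 < ?g y" using rate_pos by simp
  have Hb: "HH ?P ?g A n x \<le> ennreal C" for n x
  proof -
    have "HH ?P ?g A n x = (\<integral>\<^sup>+\<omega>. TTg jc \<sigma> A n \<omega> \<partial>M x)" by (rule E_TT[symmetric])
    also have "\<dots> \<le> (\<integral>\<^sup>+\<omega>. hitting_time jc \<sigma> A \<omega> \<partial>M x)"
    proof (rule nn_integral_mono_AE)
      show "AE \<omega> in M x. TTg jc \<sigma> A n \<omega> \<le> hitting_time jc \<sigma> A \<omega>"
        using AEpos[of x] by eventually_elim (rule TT_le_hit, use less_imp_le in blast)
    qed
    also have "\<dots> \<le> ennreal C" using hyp by (simp add: expected_hitting_time_def)
    finally show ?thesis .
  qed
  have Q0: "(INF n. QQ ?P A n x) = 0" for x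
  proof -
    let ?N = "{\<omega>\<in>space (M x). \<forall>k. jc k \<omega> \<notin> A}"
    have Nm: "?N \<in> sets (M x)" by measurable
    have "emeasure (M x) ?N = 0"
    proof (rule ccontr)
      assume ne: "emeasure (M x) ?N \<noteq> 0"
      have "top * emeasure (M x) ?N = (\<integral>\<^sup>+\<omega>. top * indicator ?N \<omega> \<partial>M x)"
        by (rule nn_integral_cmult_indicator[OF Nm, symmetric])
      also have "\<dots> \<le> (\<integral>\<^sup>+\<omega>. hitting_time jc \<sigma> A \<omega> \<partial>M x)"
        by (rule nn_integral_mono) (auto simp: hit_never split: split_indicator)
      also have "\<dots> \<le> ennreal C" using hyp by (simp add: expected_hitting_time_def)
      finally have "top * emeasure (M x) ?N \<le> ennreal C" .
      moreover have "top * emeasure (M x) ?N = top" using ne by (simp add: ennreal_top_mult)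
      ultimately show False by (simp add: top_unique)
    qed
    then show ?thesis by (simp add: INF_QQ)
  qed
  have irr': "\<forall>x y. (x,y) \<in> {(u,v). ?P u v > 0}\<^sup>*" using irr by (simp add: jump_irreducible_def)
  obtain A' where A': "finite A'" "A \<subseteq> A'" "z \<in> A'"
      "\<forall>a\<in>A'. (a,z) \<in> {(u,v). u \<in> A' \<and> v \<in> A' \<and> ?P u v > 0}\<^sup>*"
    using enlarge[OF irr' finA] by blast
  have HbA': "HH ?P ?g A' n x \<le> ennreal C" for n x
    by (rule order_trans[OF HH_mono_B[OF Pnn Prow A'(2)] Hb])
  have Q0A': "(INF n. QQ ?P A' n x) = 0" for x
  proof -
    have "(INF n. QQ ?P A' n x) \<le> (INF n. QQ ?P A n x)"
      by (rule INF_mono'[OF QQ_mono_B[OF Pnn Prow A'(2)]])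
    then show ?thesis using Q0[of x] by simp
  qed
  have conn: "\<And>a. a \<in> A' \<Longrightarrow> (a,z) \<in> {(u,v). u \<in> A' \<and> v \<in> A' \<and> ?P u v > 0}\<^sup>*"
    using A'(4) by blast
  obtain K where K: "K > 0" "\<forall>n x. HH ?P ?g {z} n x \<le> ennreal K"
    using time_core[OF Pnn Prow A'(1) A'(3) conn gpos less_imp_le[OF Cpos] HbA'] by blast
  have hitz: "(INF n. QQ ?P {z} n x) = 0" for x
    by (rule hit_core[OF Pnn Prow A'(1) A'(3) conn Q0A'])
  show ?thesis unfolding implodes_towards_def
  proof (intro exI[of _ K] conjI allI impI)
    show "K > 0" by (rule K(1))
    fix x assume "x \<notin> {z}"
    let ?N = "{\<omega>\<in>space (M x). \<forall>k. jc k \<omega> \<notin> {z}}"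
    have Nnull: "?N \<in> null_sets (M x)"
    proof -
      have Nm: "?N \<in> sets (M x)" by measurable
      have "emeasure (M x) ?N = 0" using hitz[of x] by (simp add: INF_QQ)
      then show ?thesis using Nm by (simp add: null_sets_def)
    qed
    have AEhit: "AE \<omega> in M x. \<exists>N. jc N \<omega> = z"
      by (rule AE_I'[OF Nnull]) auto
    have "expected_hitting_time M jc \<sigma> x {z} = (\<integral>\<^sup>+\<omega>. hitting_time jc \<sigma> {z} \<omega> \<partial>M x)"
      by (simp add: expected_hitting_time_def)
    also have "\<dots> \<le> (\<integral>\<^sup>+\<omega>. (SUP n. TTg jc \<sigma> {z} n \<omega>) \<partial>M x)"
    proof (rule nn_integral_mono_AE)
      show "AE \<omega> in M x. hitting_time jc \<sigma> {z} \<omega> \<le> (SUP n. TTg jc \<sigma> {z} n \<omega>)"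
        using AEpos[of x] AEhit by eventually_elim (auto intro: hit_le_TT)
    qed
    also have "\<dots> = (SUP n. \<integral>\<^sup>+\<omega>. TTg jc \<sigma> {z} n \<omega> \<partial>M x)"
      by (rule nn_integral_monotone_convergence_SUP[OF TTg_inc]) simp
    also have "\<dots> = (SUP n. HH ?P ?g {z} n x)" by (simp add: E_TT)
    also have "\<dots> \<le> ennreal K" using K(2) by (intro SUP_least) auto
    finally show "expected_hitting_time M jc \<sigma> x {z} \<le> ennreal K" .
  qed
qed

end

theorem proposition2p5:
  fixes \<Gamma> :: "'a::countable \<Rightarrow> 'a \<Rightarrow> real"
    and M :: "'a \<Rightarrow> 'w measure"
    and jc :: "nat \<Rightarrow> 'w \<Rightarrow> 'a"
    and \<sigma> :: "nat \<Rightarrow> 'w \<Rightarrow> real"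
    and A :: "'a set" and C :: real
  assumes "infinite (UNIV :: 'a set)"
    and "generator \<Gamma>"
    and "jump_irreducible \<Gamma>"
    and "ctmc_realization \<Gamma> M jc \<sigma>"
    and "recurrent_chain M jc"
    and "finite A" and "C > 0"
    and "\<forall>x. expected_hitting_time M jc \<sigma> x A \<le> ennreal C"
  shows "\<forall>z. implodes_towards M jc \<sigma> {z}"
    using main[OF assms(2) assms(4) assms(3) assms(6) assms(7) assms(8)] by blast

end
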